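(* For $n\ge 2$, the group $TVH_n$ is generated by the elements $x_{kl}$ ($1\le k\ne l\le n$) and $\gamma_j$ ($1\le j\le n$), and a complete set of defining relations in these generators is: $x_{ij}x_{kl}=x_{kl}x_{ij}$ for pairwise distinct $i,j,k,l$; $x_{ik}x_{kj}x_{ik}=x_{kj}x_{ik}x_{kj}$ for pairwise distinct $i,j,k$; $\gamma_i^2=1$; $\gamma_i\gamma_j=\gamma_j\gamma_i$ for $i\ne j$; $x_{ij}\gamma_k=\gamma_k x_{ij}$ for pairwise distinct $i,j,k$; $x_{ij}=\gamma_i\gamma_j x_{ji}\gamma_j\gamma_i$ for $i\ne j$.
   Context: For $n\ge 2$, the twisted virtual braid group $TVB_n$ is the group with generators $\sigma_1,\dots,\sigma_{n-1}$, $\rho_1,\dots,\rho_{n-1}$, $\gamma_1,\dots,\gamma_n$ and defining relations: $\sigma_i\sigma_{i+1}\sigma_i=\sigma_{i+1}\sigma_i\sigma_{i+1}$ ($1\le i\le n-2$); $\sigma_i\sigma_j=\sigma_j\sigma_i$ ($|i-j|\ge 2$); $\rho_i^2=1$; $\rho_i\rho_j=\rho_j\rho_i$ ($|i-j|\ge2$); $\rho_i\rho_{i+1}\rho_i=\rho_{i+1}\rho_i\rho_{i+1}$ ($1\le i\le n-2$); $\sigma_i\rho_j=\rho_j\sigma_i$ ($|i-j|\ge 2$); $\rho_i\rho_{i+1}\sigma_i=\sigma_{i+1}\rho_i\rho_{i+1}$ ($1\le i\le n-2$); $\gamma_i^2=1$ and $\gamma_i\gamma_j=\gamma_j\gamma_i$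 (all $i,j$); $\gamma_j\rho_i=\rho_i\gamma_j$ and $\gamma_j\sigma_i=\sigma_i\gamma_j$ for $j\notin\{i,i+1\}$; $\rho_i\gamma_i=\gamma_{i+1}\rho_i$ ($1\le i\le n-1$); $\rho_i\sigma_i\rho_i=\gamma_{i+1}\gamma_i\sigma_i\gamma_i\gamma_{i+1}$ ($1\le i\le n-1$). $\varphi_H:TVB_n\to S_n$ is the homomorphism with $\sigma_i\mapsto e$, $\rho_i\mapsto(i,i+1)$, $\gamma_j\mapsto e$, and $TVH_n=\ker\varphi_H$. In $TVB_n$ define $x_{i,i+1}=\sigma_i$, $x_{i+1,i}=\rho_i\sigma_i\rho_i$ ($1\le i\le n-1$), and for $1\le i<j-1\le n-1$: $x_{ij}=\rho_{j-1}\cdots\rho_{i+1}\sigma_i\rho_{i+1}\cdots\rho_{j-1}$, $x_{ji}=\rho_{j-1}\cdots\rho_{i+1}\rho_i\sigma_i\rho_i\rho_{i+1}\cdots\rho_{j-1}$. *)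

theory Defs
  imports "HOL-Combinatorics.Transposition"
begin

text \<open>A word over an alphabet 'a is a list of signed letters; (a, True) is the
generator a, (a, False) its formal inverse.\<close>

type_synonym 'a word = "('a \<times> bool) list"

definition inv_word :: "'a word \<Rightarrow> 'a word" where
  "inv_word w = rev (map (\<lambda>(a, b). (a, \<not> b)) w)"

text \<open>Equality in the group presented by the relations R (a set of pairs (l, r)
meaning the relation l = r): the congruence on words generated by free
cancellation and the relations.\<close>

inductive pres_eq :: "('a word \<times> 'a word) set \<Rightarrow> 'a word \<Rightarrow> 'a word \<Rightarrow> bool"
  for R where
  refl: "pres_eq R w w"
| sym: "pres_eq R u w \<Longrightarrow> pres_eq R w u"
| trans: "pres_eq R u v \<Longrightarrow> pres_eq R v w \<Longrightarrow> pres_eq R u w"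
| cancel: "pres_eq R (u @ [(a, b), (a, \<not> b)] @ v) (u @ v)"
| rel: "(l, r) \<in> R \<Longrightarrow> pres_eq R (u @ l @ v) (u @ r @ v)"

datatype tvb_gen = Sig nat | Rho nat | Gam nat

definition tvb_valid_gen :: "nat \<Rightarrow> tvb_gen \<Rightarrow> bool" where
  "tvb_valid_gen n g = (case g of
      Sig i \<Rightarrow> 1 \<le> i \<and> i \<le> n - 1
    | Rho i \<Rightarrow> 1 \<le> i \<and> i \<le> n - 1
    | Gam j \<Rightarrow> 1 \<le> j \<and> j \<le> n)"

definition valid_tvb :: "nat \<Rightarrow> tvb_gen word \<Rightarrow> bool" where
  "valid_tvb n w = (\<forall>(g, b) \<in> set w. tvb_valid_gen n g)"

abbreviation s :: "nat \<Rightarrow> tvb_gen \<times> bool" where "s i \<equiv> (Sig i, True)"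
abbreviation r :: "nat \<Rightarrow> tvb_gen \<times> bool" where "r i \<equiv> (Rho i, True)"
abbreviation g :: "nat \<Rightarrow> tvb_gen \<times> bool" where "g i \<equiv> (Gam i, True)"

text \<open>Defining relations of TVB_n (indices 1-based as in the paper).\<close>

definition tvb_rels :: "nat \<Rightarrow> (tvb_gen word \<times> tvb_gen word) set" where
  "tvb_rels n =
     {([s i, s (i+1), s i], [s (i+1), s i, s (i+1)]) | i. 1 \<le> i \<and> i \<le> n - 2}
   \<union> {([s i, s j], [s j, s i]) | i j. 1 \<le> i \<and> i \<le> n - 1 \<and> 1 \<le> j \<and> j \<le> n - 1
        \<and> (i + 2 \<le> j \<or> j + 2 \<le> i)}
   \<union> {([r i, r i], []) | i. 1 \<le> i \<and> i \<le> n - 1}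
   \<union> {([r i, r j], [r j, r i]) | i j. 1 \<le> i \<and> i \<le> n - 1 \<and> 1 \<le> j \<and> j \<le> n - 1
        \<and> (i + 2 \<le> j \<or> j + 2 \<le> i)}
   \<union> {([r i, r (i+1), r i], [r (i+1), r i, r (i+1)]) | i. 1 \<le> i \<and> i \<le> n - 2}
   \<union> {([s i, r j], [r j, s i]) | i j. 1 \<le> i \<and> i \<le> n - 1 \<and> 1 \<le> j \<and> j \<le> n - 1
        \<and> (i + 2 \<le> j \<or> j + 2 \<le> i)}
   \<union> {([r i, r (i+1), s i], [s (i+1), r i, r (i+1)]) | i. 1 \<le> i \<and> i \<le> n - 2}
   \<union> {([g i, g i], []) | i. 1 \<le> i \<and> i \<le> n}
   \<union> {([g i, g j], [g j, g i]) | i j. 1 \<le> i \<and> i \<le> n \<and> 1 \<le> j \<and> j \<le> n}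
   \<union> {([g j, r i], [r i, g j]) | i j. 1 \<le> i \<and> i \<le> n - 1 \<and> 1 \<le> j \<and> j \<le> n
        \<and> j \<noteq> i \<and> j \<noteq> i + 1}
   \<union> {([g j, s i], [s i, g j]) | i j. 1 \<le> i \<and> i \<le> n - 1 \<and> 1 \<le> j \<and> j \<le> n
        \<and> j \<noteq> i \<and> j \<noteq> i + 1}
   \<union> {([r i, g i], [g (i+1), r i]) | i. 1 \<le> i \<and> i \<le> n - 1}
   \<union> {([r i, s i, r i], [g (i+1), g i, s i, g i, g (i+1)]) | i. 1 \<le> i \<and> i \<le> n - 1}"

definition letter_perm :: "tvb_gen \<Rightarrow> nat \<Rightarrow> nat" where
  "letter_perm x = (case x of Sig i \<Rightarrow> id | Rho i \<Rightarrow> transpose i (i+1) | Gam j \<Rightarrow> id)"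

text \<open>Image under phi_H of (the element represented by) a word, as a permutation
of the natural numbers (moving only points of {1..n} for valid words).\<close>

definition phiH :: "tvb_gen word \<Rightarrow> nat \<Rightarrow> nat" where
  "phiH w = foldr (\<lambda>(x, b) f. (if b then letter_perm x else inv (letter_perm x)) \<circ> f) w id"

definition rhos :: "nat \<Rightarrow> nat \<Rightarrow> tvb_gen word" where
  "rhos a b = map (\<lambda>k. r k) [a..<Suc b]"

definition xword :: "nat \<Rightarrow> nat \<Rightarrow> tvb_gen word" where
  "xword k l =
     (if l = k + 1 then [s k]
      else if k = l + 1 then [r l, s l, r l]
      else if k < l then rev (rhos (k+1) (l-1)) @ [s k] @ rhos (k+1) (l-1)
      else rev (rhos l (k-1)) @ [s l] @ rhos l (k-1))"

datatype tvh_gen = X nat nat | G nat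

definition tvh_valid_gen :: "nat \<Rightarrow> tvh_gen \<Rightarrow> bool" where
  "tvh_valid_gen n y = (case y of
      X k l \<Rightarrow> 1 \<le> k \<and> k \<le> n \<and> 1 \<le> l \<and> l \<le> n \<and> k \<noteq> l
    | G j \<Rightarrow> 1 \<le> j \<and> j \<le> n)"

definition valid_tvh :: "nat \<Rightarrow> tvh_gen word \<Rightarrow> bool" where
  "valid_tvh n v = (\<forall>(y, b) \<in> set v. tvh_valid_gen n y)"

definition tvh_img :: "tvh_gen \<Rightarrow> tvb_gen word" where
  "tvh_img y = (case y of X k l \<Rightarrow> xword k l | G j \<Rightarrow> [g j])"

definition subst :: "tvh_gen word \<Rightarrow> tvb_gen word" where
  "subst v = concat (map (\<lambda>(y, b). if b then tvh_img y else inv_word (tvh_img y)) v)"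

abbreviation xx :: "nat \<Rightarrow> nat \<Rightarrow> tvh_gen \<times> bool" where "xx i j \<equiv> (X i j, True)"
abbreviation gg :: "nat \<Rightarrow> tvh_gen \<times> bool" where "gg i \<equiv> (G i, True)"

definition inrange :: "nat \<Rightarrow> nat \<Rightarrow> bool" where
  "inrange n i = (1 \<le> i \<and> i \<le> n)"

definition tvh_rels :: "nat \<Rightarrow> (tvh_gen word \<times> tvh_gen word) set" where
  "tvh_rels n =
     {([xx i j, xx k l], [xx k l, xx i j]) | i j k l.
        inrange n i \<and> inrange n j \<and> inrange n k \<and> inrange n l
        \<and> distinct [i, j, k, l]}
   \<union> {([xx i k, xx k j, xx i k], [xx k j, xx i k, xx k j]) | i j k.
        inrange n i \<and> inrange n j \<and> inrange n k \<and> distinct [i, j, k]}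
   \<union> {([gg i, gg i], []) | i. inrange n i}
   \<union> {([gg i, gg j], [gg j, gg i]) | i j. inrange n i \<and> inrange n j \<and> i \<noteq> j}
   \<union> {([xx i j, gg k], [gg k, xx i j]) | i j k.
        inrange n i \<and> inrange n j \<and> inrange n k \<and> distinct [i, j, k]}
   \<union> {([xx i j], [gg i, gg j, xx j i, gg j, gg i]) | i j.
        inrange n i \<and> inrange n j \<and> i \<noteq> j}"

end

theory Submission
  imports Defs
begin


lemma pe_ctx: "pres_eq R a b \<Longrightarrow> pres_eq R (u @ a @ v) (u @ b @ v)"
proof (induction rule: pres_eq.induct)
  case (refl w) then show ?case by (rule pres_eq.refl)
next
  case (sym x w) then show ?case by (blast intro: pres_eq.sym)
next
  case (trans x y w) then show ?case by (metis pres_eq.trans)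
next
  case (cancel u' a b v')
  have "pres_eq R ((u @ u') @ [(a, b), (a, \<not> b)] @ (v' @ v)) ((u @ u') @ (v' @ v))"
    by (rule pres_eq.cancel)
  then show ?case by simp
next
  case (rel l q u' v')
  have "pres_eq R ((u @ u') @ l @ (v' @ v)) ((u @ u') @ q @ (v' @ v))"
    by (rule pres_eq.rel[OF rel])
  then show ?case by simp
qed

lemma pe_ctx': "pres_eq R a b \<Longrightarrow> x = u @ a @ v \<Longrightarrow> y = u @ b @ v \<Longrightarrow> pres_eq R x y"
  using pe_ctx by blast

lemma pe_app: "pres_eq R a b \<Longrightarrow> pres_eq R c d \<Longrightarrow> pres_eq R (a @ c) (b @ d)"
  by (metis pe_ctx append_Nil append_Nil2 pres_eq.trans)

lemma pe_rel: "(l, q) \<in> R \<Longrightarrow> pres_eq R l q"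
  using pres_eq.rel[of l q R "[]" "[]"] by simp

lemma pe_cancel: "pres_eq R [(a, b), (a, \<not> b)] []"
  using pres_eq.cancel[of R "[]" a b "[]"] by simp

lemmas [trans] = pres_eq.trans

fun tau :: "nat \<Rightarrow> (nat \<Rightarrow> nat) \<Rightarrow> tvb_gen word \<Rightarrow> tvh_gen word" where
  "tau n p [] = []"
| "tau n p ((Sig i, b) # w) = (if 1 \<le> i \<and> i \<le> n - 1 then [(X (p i) (p (Suc i)), b)] else []) @ tau n p w"
| "tau n p ((Rho i, b) # w) = tau n (if 1 \<le> i \<and> i \<le> n - 1 then p \<circ> transpose i (Suc i) else p) w"
| "tau n p ((Gam j, b) # w) = (if 1 \<le> j \<and> j \<le> n then [(G (p j), b)] else []) @ tau n p w"

fun st :: "nat \<Rightarrow> (nat \<Rightarrow> nat) \<Rightarrow> tvb_gen word \<Rightarrow> (nat \<Rightarrow> nat)" where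
  "st n p [] = p"
| "st n p ((Sig i, b) # w) = st n p w"
| "st n p ((Rho i, b) # w) = st n (if 1 \<le> i \<and> i \<le> n - 1 then p \<circ> transpose i (Suc i) else p) w"
| "st n p ((Gam j, b) # w) = st n p w"

lemma tau_st_append: "tau n p (u @ v) = tau n p u @ tau n (st n p u) v \<and> st n p (u @ v) = st n (st n p u) v"
proof (induction u arbitrary: p)
  case Nil then show ?case by simp
next
  case (Cons a u)
  obtain x b where a: "a = (x, b)" by (cases a)
  show ?case using Cons by (cases x) (simp_all add: a)
qed

lemma tau_append: "tau n p (u @ v) = tau n p u @ tau n (st n p u) v"
  and st_append: "st n p (u @ v) = st n (st n p u) v"
  using tau_st_append by auto

definition PP :: "nat \<Rightarrow> (nat \<Rightarrow> nat) \<Rightarrow> bool" where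
  "PP n p = ((\<forall>i. 1 \<le> i \<and> i \<le> n \<longrightarrow> 1 \<le> p i \<and> p i \<le> n) \<and> inj_on p {1..n})"

lemma transpose_range: "1 \<le> i \<Longrightarrow> i \<le> n - 1 \<Longrightarrow> 1 \<le> j \<Longrightarrow> j \<le> n
  \<Longrightarrow> 1 \<le> transpose i (Suc i) j \<and> transpose i (Suc i) j \<le> n"
  unfolding transpose_def by auto

lemma PP_step: "PP n p \<Longrightarrow> 1 \<le> i \<Longrightarrow> i \<le> n - 1 \<Longrightarrow> PP n (p \<circ> transpose i (Suc i))"
proof -
  assume h: "PP n p" "1 \<le> i" "i \<le> n - 1"
  have A: "\<forall>j. 1 \<le> j \<and> j \<le> n \<longrightarrow> 1 \<le> p j \<and> p j \<le> n" and B: "inj_on p {1..n}"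
    using h(1) unfolding PP_def by blast+
  have C: "\<forall>j. 1 \<le> j \<and> j \<le> n \<longrightarrow> 1 \<le> (p \<circ> transpose i (Suc i)) j \<and> (p \<circ> transpose i (Suc i)) j \<le> n"
  proof (intro allI impI)
    fix j assume "1 \<le> j \<and> j \<le> n"
    then have "1 \<le> transpose i (Suc i) j \<and> transpose i (Suc i) j \<le> n"
      using transpose_range h(2,3) by blast
    then show "1 \<le> (p \<circ> transpose i (Suc i)) j \<and> (p \<circ> transpose i (Suc i)) j \<le> n"
      using A by simp
  qed
  have "transpose i (Suc i) ` {1..n} = {1..n}" using h(2,3) by (intro transpose_image_eq) auto
  then have "inj_on (p \<circ> transpose i (Suc i)) {1..n}"
    using B by (intro comp_inj_on) auto
  with C show ?thesis unfolding PP_def by blast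
qed

lemma PP_st: "PP n p \<Longrightarrow> PP n (st n p w)"
proof (induction w arbitrary: p)
  case Nil then show ?case by simp
next
  case (Cons a w)
  obtain x b where a: "a = (x, b)" by (cases a)
  show ?case using Cons by (cases x) (simp_all add: a PP_step)
qed

lemma PP_id: "PP n id" by (simp add: PP_def)

lemma tvh_r1: "inrange n i \<Longrightarrow> inrange n j \<Longrightarrow> inrange n k \<Longrightarrow> inrange n l \<Longrightarrow> distinct [i, j, k, l]
  \<Longrightarrow> ([xx i j, xx k l], [xx k l, xx i j]) \<in> tvh_rels n"
  unfolding tvh_rels_def by (simp add: inrange_def)
lemma tvh_r2: "inrange n i \<Longrightarrow> inrange n j \<Longrightarrow> inrange n k \<Longrightarrow> distinct [i, j, k]
  \<Longrightarrow> ([xx i k, xx k j, xx i k], [xx k j, xx i k, xx k j]) \<in> tvh_rels n"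
  unfolding tvh_rels_def by (simp add: inrange_def)
lemma tvh_r3: "inrange n i \<Longrightarrow> ([gg i, gg i], []) \<in> tvh_rels n"
  unfolding tvh_rels_def by (simp add: inrange_def)
lemma tvh_r4: "inrange n i \<Longrightarrow> inrange n j \<Longrightarrow> i \<noteq> j \<Longrightarrow> ([gg i, gg j], [gg j, gg i]) \<in> tvh_rels n"
  unfolding tvh_rels_def by (simp add: inrange_def)
lemma tvh_r5: "inrange n i \<Longrightarrow> inrange n j \<Longrightarrow> inrange n k \<Longrightarrow> distinct [i, j, k]
  \<Longrightarrow> ([xx i j, gg k], [gg k, xx i j]) \<in> tvh_rels n"
  unfolding tvh_rels_def by (simp add: inrange_def)
lemma tvh_r6: "inrange n i \<Longrightarrow> inrange n j \<Longrightarrow> i \<noteq> j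
  \<Longrightarrow> ([xx i j], [gg i, gg j, xx j i, gg j, gg i]) \<in> tvh_rels n"
  unfolding tvh_rels_def by (simp add: inrange_def)

lemma PP_in: "PP n p \<Longrightarrow> 1 \<le> i \<Longrightarrow> i \<le> n \<Longrightarrow> inrange n (p i)"
  unfolding PP_def inrange_def by blast
lemma PP_ne: "PP n p \<Longrightarrow> 1 \<le> i \<Longrightarrow> i \<le> n \<Longrightarrow> 1 \<le> j \<Longrightarrow> j \<le> n \<Longrightarrow> i \<noteq> j \<Longrightarrow> p i \<noteq> p j"
  unfolding PP_def inj_on_def by (meson atLeastAtMost_iff)


lemma tcomm: "i + 2 \<le> j \<or> j + 2 \<le> i \<Longrightarrow>
  transpose i (Suc i) \<circ> transpose j (Suc j) = transpose j (Suc j) \<circ> transpose i (Suc i)"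
  by (rule ext) (unfold transpose_def, auto)

lemma tbraid: "transpose i (Suc i) \<circ> transpose (Suc i) (Suc (Suc i)) \<circ> transpose i (Suc i) =
  transpose (Suc i) (Suc (Suc i)) \<circ> transpose i (Suc i) \<circ> transpose (Suc i) (Suc (Suc i))"
  by (rule ext) (unfold transpose_def, auto)

lemma rel_tau:
  assumes "(l, q) \<in> tvb_rels n" "PP n p"
  shows "pres_eq (tvh_rels n) (tau n p l) (tau n p q) \<and> st n p l = st n p q"
  using assms(1) unfolding tvb_rels_def
proof (elim UnE CollectE exE conjE)
  fix i assume h: "(l, q) = ([s i, s (i + 1), s i], [s (i + 1), s i, s (i + 1)])" "1 \<le> i" "i \<le> n - 2"
  have "pres_eq (tvh_rels n) [xx (p i) (p (Suc i)), xx (p (Suc i)) (p (Suc (Suc i))), xx (p i) (p (Suc i))]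
      [xx (p (Suc i)) (p (Suc (Suc i))), xx (p i) (p (Suc i)), xx (p (Suc i)) (p (Suc (Suc i)))]"
    using h assms(2) by (intro pe_rel tvh_r2) (auto simp: PP_in[OF assms(2)] PP_ne[OF assms(2)])
  then show ?thesis using h by (auto simp: pres_eq.refl)
next
  fix i j assume h: "(l, q) = ([s i, s j], [s j, s i])" "1 \<le> i" "i \<le> n - 1" "1 \<le> j" "j \<le> n - 1"
    "i + 2 \<le> j \<or> j + 2 \<le> i"
  have "pres_eq (tvh_rels n) [xx (p i) (p (Suc i)), xx (p j) (p (Suc j))]
      [xx (p j) (p (Suc j)), xx (p i) (p (Suc i))]"
    using h assms(2) by (intro pe_rel tvh_r1) (auto simp: PP_in[OF assms(2)] PP_ne[OF assms(2)])
  then show ?thesis using h by (auto simp: pres_eq.refl)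
next
  fix i assume h: "(l, q) = ([r i, r i], [])" "1 \<le> i" "i \<le> n - 1"
  then show ?thesis by (simp add: comp_assoc pres_eq.refl)
next
  fix i j assume h: "(l, q) = ([r i, r j], [r j, r i])" "1 \<le> i" "i \<le> n - 1" "1 \<le> j" "j \<le> n - 1"
    "i + 2 \<le> j \<or> j + 2 \<le> i"
  then show ?thesis using tcomm[of i j] by (simp add: comp_assoc pres_eq.refl)
next
  fix i assume h: "(l, q) = ([r i, r (i + 1), r i], [r (i + 1), r i, r (i + 1)])" "1 \<le> i" "i \<le> n - 2"
  then show ?thesis using tbraid[of i] by (simp add: comp_assoc pres_eq.refl)
next
  fix i j assume h: "(l, q) = ([s i, r j], [r j, s i])" "1 \<le> i" "i \<le> n - 1" "1 \<le> j" "j \<le> n - 1"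
    "i + 2 \<le> j \<or> j + 2 \<le> i"
  then show ?thesis by (auto simp: pres_eq.refl transpose_def)
next
  fix i assume h: "(l, q) = ([r i, r (i + 1), s i], [s (i + 1), r i, r (i + 1)])" "1 \<le> i" "i \<le> n - 2"
  then show ?thesis by (auto simp: pres_eq.refl transpose_def)
next
  fix i assume h: "(l, q) = ([g i, g i], [])" "1 \<le> i" "i \<le> n"
  have "pres_eq (tvh_rels n) [gg (p i), gg (p i)] []"
    using h assms(2) by (intro pe_rel tvh_r3) (auto simp: PP_in[OF assms(2)])
  then show ?thesis using h by (auto simp: pres_eq.refl)
next
  fix i j assume h: "(l, q) = ([g i, g j], [g j, g i])" "1 \<le> i" "i \<le> n" "1 \<le> j" "j \<le> n"
  show ?thesis
  proof (cases "i = j")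
    case True then show ?thesis using h by (simp add: pres_eq.refl)
  next
    case False
    have "pres_eq (tvh_rels n) [gg (p i), gg (p j)] [gg (p j), gg (p i)]"
      using h assms(2) False by (intro pe_rel tvh_r4) (auto simp: PP_in[OF assms(2)] PP_ne[OF assms(2)])
    then show ?thesis using h by (auto simp: pres_eq.refl)
  qed
next
  fix i j assume h: "(l, q) = ([g j, r i], [r i, g j])" "1 \<le> i" "i \<le> n - 1" "1 \<le> j" "j \<le> n"
    "j \<noteq> i" "j \<noteq> i + 1"
  then show ?thesis by (auto simp: pres_eq.refl transpose_def)
next
  fix i j assume h: "(l, q) = ([g j, s i], [s i, g j])" "1 \<le> i" "i \<le> n - 1" "1 \<le> j" "j \<le> n"
    "j \<noteq> i" "j \<noteq> i + 1"
  have "pres_eq (tvh_rels n) [xx (p i) (p (Suc i)), gg (p j)] [gg (p j), xx (p i) (p (Suc i))]"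
    using h assms(2) by (intro pe_rel tvh_r5) (auto simp: PP_in[OF assms(2)] PP_ne[OF assms(2)])
  then show ?thesis using h by (simp add: pres_eq.sym)
next
  fix i assume h: "(l, q) = ([r i, g i], [g (i + 1), r i])" "1 \<le> i" "i \<le> n - 1"
  then show ?thesis by (auto simp: pres_eq.refl)
next
  fix i assume h: "(l, q) = ([r i, s i, r i], [g (i + 1), g i, s i, g i, g (i + 1)])" "1 \<le> i" "i \<le> n - 1"
  have "pres_eq (tvh_rels n) [xx (p (Suc i)) (p i)]
     [gg (p (Suc i)), gg (p i), xx (p i) (p (Suc i)), gg (p i), gg (p (Suc i))]"
    using h assms(2) by (intro pe_rel tvh_r6) (auto simp: PP_in[OF assms(2)] PP_ne[OF assms(2)])
  then show ?thesis using h by (auto simp: comp_assoc)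
qed


lemma tau_pres:
  assumes "pres_eq (tvb_rels n) w1 w2"
  shows "PP n p \<Longrightarrow> pres_eq (tvh_rels n) (tau n p w1) (tau n p w2) \<and> st n p w1 = st n p w2"
  using assms
proof (induction arbitrary: p rule: pres_eq.induct)
  case (refl w) then show ?case by (simp add: pres_eq.refl)
next
  case (sym x w) then show ?case by (metis pres_eq.sym)
next
  case (trans x y w) then show ?case by (metis pres_eq.trans)
next
  case (cancel u a b v)
  define p' where "p' = st n p u"
  have mid: "pres_eq (tvh_rels n) (tau n p' [(a, b), (a, \<not> b)]) [] \<and> st n p' [(a, b), (a, \<not> b)] = p'"
  proof (cases a)
    case (Sig i) then show ?thesis by (auto simp: pe_cancel pres_eq.refl)
  next
    case (Rho i) then show ?thesis by (auto simp: pres_eq.refl comp_assoc)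
  next
    case (Gam i) then show ?thesis by (auto simp: pe_cancel pres_eq.refl)
  qed
  have "pres_eq (tvh_rels n) (tau n p u @ tau n p' [(a, b), (a, \<not> b)] @ tau n p' v) (tau n p u @ [] @ tau n p' v)"
    using mid by (intro pe_ctx) simp
  moreover have "tau n p (u @ [(a, b), (a, \<not> b)] @ v) = tau n p u @ tau n p' [(a, b), (a, \<not> b)] @ tau n p' v"
    unfolding tau_append st_append p'_def[symmetric] mid[THEN conjunct2] by simp
  moreover have "tau n p (u @ v) = tau n p u @ [] @ tau n p' v"
    unfolding tau_append p'_def by simp
  moreover have "st n p (u @ [(a, b), (a, \<not> b)] @ v) = st n p (u @ v)"
    unfolding st_append p'_def[symmetric] mid[THEN conjunct2] by simp
  ultimately show ?case by simp
next
  case (rel l q u v)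
  define p' where "p' = st n p u"
  have "PP n p'" using rel PP_st p'_def by blast
  then have mid: "pres_eq (tvh_rels n) (tau n p' l) (tau n p' q) \<and> st n p' l = st n p' q"
    using rel_tau rel by blast
  have "pres_eq (tvh_rels n) (tau n p u @ tau n p' l @ tau n (st n p' l) v) (tau n p u @ tau n p' q @ tau n (st n p' l) v)"
    using mid by (intro pe_ctx) simp
  then show ?case using mid by (simp add: tau_append st_append p'_def)
qed

definition rhob :: "bool \<Rightarrow> nat list \<Rightarrow> tvb_gen word" where
  "rhob c L = map (\<lambda>k. (Rho k, c)) L"

lemma rhos_rhob: "rhos a b = rhob True [a..<Suc b]"
  by (simp add: rhos_def rhob_def)

lemma tau_rhob: "tau n p (rhob c L) = []" "tau n p (rev (rhob c L)) = []"
proof -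
  show "tau n p (rhob c L) = []"
    by (induction L arbitrary: p) (auto simp: rhob_def)
  show "tau n p (rev (rhob c L)) = []"
    by (induction L arbitrary: p) (auto simp: rhob_def tau_append)
qed

lemma st_rhob_back: "st n p (rev (rhob c L) @ rhob c' L) = p"
proof (induction L arbitrary: p)
  case Nil then show ?case by (simp add: rhob_def)
next
  case (Cons x L)
  have e: "rev (rhob c (x # L)) @ rhob c' (x # L) = rev (rhob c L) @ [(Rho x, c), (Rho x, c')] @ rhob c' L"
    by (simp add: rhob_def)
  have "st n (st n p (rev (rhob c L))) [(Rho x, c), (Rho x, c')] = st n p (rev (rhob c L))"
    by (simp add: comp_assoc)
  then show ?case unfolding e st_append using Cons[of p] by (simp add: st_append)
qed

definition cyc :: "nat \<Rightarrow> nat \<Rightarrow> nat \<Rightarrow> nat" where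
  "cyc a b x = (if x = a then Suc b else if a < x \<and> x \<le> Suc b then x - 1 else x)"

lemma st_cyc: "1 \<le> a \<Longrightarrow> b \<le> n - 1 \<Longrightarrow> a \<le> Suc b \<Longrightarrow> st n p (rev (rhob c [a..<Suc b])) = p \<circ> cyc a b"
proof (induction b arbitrary: p)
  case 0
  then have "a = 1" by simp
  then show ?case by (auto simp: rhob_def cyc_def fun_eq_iff)
next
  case (Suc b)
  show ?case
  proof (cases "a = Suc (Suc b)")
    case True then show ?thesis by (auto simp: rhob_def cyc_def fun_eq_iff)
  next
    case False
    then have ab: "a \<le> Suc b" using Suc.prems by simp
    have e: "rev (rhob c [a..<Suc (Suc b)]) = (Rho (Suc b), c) # rev (rhob c [a..<Suc b])"
      using ab by (simp add: rhob_def)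
    have v: "1 \<le> Suc b \<and> Suc b \<le> n - 1" using Suc.prems by simp
    have IH': "st n (p \<circ> transpose (Suc b) (Suc (Suc b))) (rev (rhob c [a..<Suc b])) = p \<circ> transpose (Suc b) (Suc (Suc b)) \<circ> cyc a b"
      by (rule Suc.IH) (use Suc.prems ab in auto)
    have "st n p (rev (rhob c [a..<Suc (Suc b)])) = p \<circ> transpose (Suc b) (Suc (Suc b)) \<circ> cyc a b"
      unfolding e using v IH' by (simp del: upt_Suc)
    moreover have "transpose (Suc b) (Suc (Suc b)) \<circ> cyc a b = cyc a (Suc b)"
      using ab by (auto simp: fun_eq_iff cyc_def transpose_def)
    ultimately show ?thesis by (simp add: comp_assoc)
  qed
qed

lemma xword_lt: "k < l \<Longrightarrow> xword k l = rev (rhob True [Suc k..<l]) @ [s k] @ rhob True [Suc k..<l]"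
  by (auto simp: xword_def rhos_rhob rhob_def)

lemma xword_gt: "l < k \<Longrightarrow> xword k l = rev (rhob True [l..<k]) @ [s l] @ rhob True [l..<k]"
  by (auto simp: xword_def rhos_rhob rhob_def)

lemma inv_word_rhob: "inv_word (rhob c L) = rev (rhob (\<not> c) L)" "inv_word (rev (rhob c L)) = rhob (\<not> c) L"
  by (simp_all add: inv_word_def rhob_def rev_map)

lemma map_flip_rhob[simp]: "map (\<lambda>(a, b). (a, \<not> b)) (rhob c L) = rhob (\<not> c) L"
  by (simp add: rhob_def)

lemma inv_word_append: "inv_word (u @ v) = inv_word v @ inv_word u"
  by (simp add: inv_word_def)

lemma tau_conj:
  assumes "k < l" "1 \<le> k" "l \<le> n" "c = True \<or> c = False"
  shows "tau n p (rev (rhob c [Suc k..<l]) @ [(Sig k, b)] @ rhob c' [Suc k..<l]) = [(X (p k) (p l), b)]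
       \<and> st n p (rev (rhob c [Suc k..<l]) @ [(Sig k, b)] @ rhob c' [Suc k..<l]) = p"
proof -
  have q: "st n p (rev (rhob c [Suc k..<l])) = p \<circ> cyc (Suc k) (l - 1)"
    using st_cyc[of "Suc k" "l - 1" n p c] assms by simp
  have v: "1 \<le> k \<and> k \<le> n - 1" using assms(1,2,3) by arith
  have "tau n p (rev (rhob c [Suc k..<l]) @ [(Sig k, b)] @ rhob c' [Suc k..<l]) =
      [(X ((p \<circ> cyc (Suc k) (l - 1)) k) ((p \<circ> cyc (Suc k) (l - 1)) (Suc k)), b)]"
    by (simp add: tau_append st_append tau_rhob q) (use v in simp)
  moreover have "st n p (rev (rhob c [Suc k..<l]) @ [(Sig k, b)] @ rhob c' [Suc k..<l]) = p"
    using st_rhob_back[of n p c "[Suc k..<l]" c'] by (simp add: st_append)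
  ultimately show ?thesis using assms by (simp add: cyc_def)
qed

lemma tau_conj2:
  assumes "l < k" "1 \<le> l" "k \<le> n"
  shows "tau n p (rev (rhob c [l..<k]) @ [(Sig l, b)] @ rhob c' [l..<k]) = [(X (p k) (p l), b)]
       \<and> st n p (rev (rhob c [l..<k]) @ [(Sig l, b)] @ rhob c' [l..<k]) = p"
proof -
  have q: "st n p (rev (rhob c [l..<k])) = p \<circ> cyc l (k - 1)"
    using st_cyc[of l "k - 1" n p c] assms by simp
  have v: "1 \<le> l \<and> l \<le> n - 1" using assms(1,2,3) by arith
  have "tau n p (rev (rhob c [l..<k]) @ [(Sig l, b)] @ rhob c' [l..<k]) =
      [(X ((p \<circ> cyc l (k - 1)) l) ((p \<circ> cyc l (k - 1)) (Suc l)), b)]"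
    by (simp add: tau_append st_append tau_rhob q) (use v in simp)
  moreover have "st n p (rev (rhob c [l..<k]) @ [(Sig l, b)] @ rhob c' [l..<k]) = p"
    using st_rhob_back[of n p c "[l..<k]" c'] by (simp add: st_append)
  ultimately show ?thesis using assms by (simp add: cyc_def)
qed

fun ren :: "(nat \<Rightarrow> nat) \<Rightarrow> tvh_gen \<Rightarrow> tvh_gen" where
  "ren p (X k l) = X (p k) (p l)"
| "ren p (G j) = G (p j)"

lemma tau_img:
  assumes "tvh_valid_gen n y"
  shows "tau n p (if b then tvh_img y else inv_word (tvh_img y)) = [(ren p y, b)]
       \<and> st n p (if b then tvh_img y else inv_word (tvh_img y)) = p"
proof (cases y)
  case (X k l)
  then have kl: "1 \<le> k" "k \<le> n" "1 \<le> l" "l \<le> n" "k \<noteq> l" using assms by (auto simp: tvh_valid_gen_def)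
  show ?thesis
  proof (cases "k < l")
    case True
    have w: "(if b then tvh_img y else inv_word (tvh_img y)) =
       rev (rhob b [Suc k..<l]) @ [(Sig k, b)] @ rhob b [Suc k..<l]"
      using True X by (simp add: tvh_img_def xword_lt inv_word_append inv_word_rhob) (simp add: inv_word_def)
    show ?thesis unfolding w using tau_conj[of k l n b p b b] True kl X by simp
  next
    case False
    then have lk: "l < k" using kl by simp
    have w: "(if b then tvh_img y else inv_word (tvh_img y)) =
       rev (rhob b [l..<k]) @ [(Sig l, b)] @ rhob b [l..<k]"
      using lk X by (simp add: tvh_img_def xword_gt inv_word_append inv_word_rhob) (simp add: inv_word_def)
    show ?thesis unfolding w using tau_conj2[of l k n p b b b] lk kl X by simp
  qed
next
  case (G j)
  then show ?thesis using assms by (auto simp: tvh_valid_gen_def tvh_img_def inv_word_def)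
qed

lemma tau_subst: "valid_tvh n v \<Longrightarrow> tau n p (subst v) = map (\<lambda>(y, b). (ren p y, b)) v \<and> st n p (subst v) = p"
proof (induction v)
  case Nil then show ?case by (simp add: subst_def)
next
  case (Cons a v)
  obtain y b where a: "a = (y, b)" by (cases a)
  have vy: "tvh_valid_gen n y" and vv: "valid_tvh n v" using Cons.prems a by (auto simp: valid_tvh_def)
  have e: "subst (a # v) = (if b then tvh_img y else inv_word (tvh_img y)) @ subst v"
    by (simp add: subst_def a)
  show ?case unfolding e using tau_img[OF vy, of p b] Cons.IH[OF vv] by (simp add: tau_append st_append a)
qed

lemma ren_id: "map (\<lambda>(y, b). (ren id y, b)) v = v"
proof -
  have "ren id y = y" for y by (cases y) auto
  then show ?thesis by (induction v) auto
qed

theorem only_if_dir: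
  assumes "valid_tvh n v1" "valid_tvh n v2" "pres_eq (tvb_rels n) (subst v1) (subst v2)"
  shows "pres_eq (tvh_rels n) v1 v2"
  using tau_pres[OF assms(3) PP_id] tau_subst[OF assms(1), of id] tau_subst[OF assms(2), of id]
  by (simp add: ren_id)




abbreviation EQ :: "nat \<Rightarrow> tvb_gen word \<Rightarrow> tvb_gen word \<Rightarrow> bool" where
  "EQ n \<equiv> pres_eq (tvb_rels n)"

lemma B_ss: "1 \<le> i \<Longrightarrow> Suc i \<le> n - 1 \<Longrightarrow> EQ n [s i, s (Suc i), s i] [s (Suc i), s i, s (Suc i)]"
  by (rule pe_rel) (simp add: tvb_rels_def)
lemma B_sfar: "1 \<le> i \<Longrightarrow> i \<le> n - 1 \<Longrightarrow> 1 \<le> j \<Longrightarrow> j \<le> n - 1 \<Longrightarrow> i + 2 \<le> j \<or> j + 2 \<le> i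
  \<Longrightarrow> EQ n [s i, s j] [s j, s i]"
  by (rule pe_rel) (simp add: tvb_rels_def)
lemma B_rr: "1 \<le> i \<Longrightarrow> i \<le> n - 1 \<Longrightarrow> EQ n [r i, r i] []"
  by (rule pe_rel) (simp add: tvb_rels_def)
lemma B_rfar: "1 \<le> i \<Longrightarrow> i \<le> n - 1 \<Longrightarrow> 1 \<le> j \<Longrightarrow> j \<le> n - 1 \<Longrightarrow> i + 2 \<le> j \<or> j + 2 \<le> i
  \<Longrightarrow> EQ n [r i, r j] [r j, r i]"
  by (rule pe_rel) (simp add: tvb_rels_def)
lemma B_rbraid: "1 \<le> i \<Longrightarrow> Suc i \<le> n - 1 \<Longrightarrow> EQ n [r i, r (Suc i), r i] [r (Suc i), r i, r (Suc i)]"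
  by (rule pe_rel) (simp add: tvb_rels_def)
lemma B_srfar: "1 \<le> i \<Longrightarrow> i \<le> n - 1 \<Longrightarrow> 1 \<le> j \<Longrightarrow> j \<le> n - 1 \<Longrightarrow> i + 2 \<le> j \<or> j + 2 \<le> i
  \<Longrightarrow> EQ n [s i, r j] [r j, s i]"
  by (rule pe_rel) (simp add: tvb_rels_def)
lemma B_rrs: "1 \<le> i \<Longrightarrow> Suc i \<le> n - 1 \<Longrightarrow> EQ n [r i, r (Suc i), s i] [s (Suc i), r i, r (Suc i)]"
  by (rule pe_rel) (simp add: tvb_rels_def)
lemma B_gg: "1 \<le> i \<Longrightarrow> i \<le> n \<Longrightarrow> EQ n [g i, g i] []"
  by (rule pe_rel) (simp add: tvb_rels_def)
lemma B_gcomm: "1 \<le> i \<Longrightarrow> i \<le> n \<Longrightarrow> 1 \<le> j \<Longrightarrow> j \<le> n \<Longrightarrow> EQ n [g i, g j] [g j, g i]"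
  by (rule pe_rel) (simp add: tvb_rels_def)
lemma B_grfar: "1 \<le> i \<Longrightarrow> i \<le> n - 1 \<Longrightarrow> 1 \<le> j \<Longrightarrow> j \<le> n \<Longrightarrow> j \<noteq> i \<Longrightarrow> j \<noteq> Suc i
  \<Longrightarrow> EQ n [g j, r i] [r i, g j]"
  by (rule pe_rel) (simp add: tvb_rels_def)
lemma B_gsfar: "1 \<le> i \<Longrightarrow> i \<le> n - 1 \<Longrightarrow> 1 \<le> j \<Longrightarrow> j \<le> n \<Longrightarrow> j \<noteq> i \<Longrightarrow> j \<noteq> Suc i
  \<Longrightarrow> EQ n [g j, s i] [s i, g j]"
  by (rule pe_rel) (simp add: tvb_rels_def)
lemma B_rg: "1 \<le> i \<Longrightarrow> i \<le> n - 1 \<Longrightarrow> EQ n [r i, g i] [g (Suc i), r i]"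
  by (rule pe_rel) (simp add: tvb_rels_def)
lemma B_rsr: "1 \<le> i \<Longrightarrow> i \<le> n - 1 \<Longrightarrow> EQ n [r i, s i, r i] [g (Suc i), g i, s i, g i, g (Suc i)]"
  by (rule pe_rel) (simp add: tvb_rels_def)

lemma pe_refl: "pres_eq R a a" by (rule pres_eq.refl)
lemma pe_sym: "pres_eq R a b \<Longrightarrow> pres_eq R b a" by (rule pres_eq.sym)

lemma rw: "pres_eq R a b \<Longrightarrow> x = u @ a @ v \<Longrightarrow> pres_eq R x (u @ b @ v)"
  using pe_ctx by blast
lemma rwb: "pres_eq R b a \<Longrightarrow> x = u @ a @ v \<Longrightarrow> pres_eq R x (u @ b @ v)"
  using pe_ctx pe_sym by blast

lemma K3: "1 \<le> m \<Longrightarrow> m \<le> n - 1 \<Longrightarrow> EQ n [(Rho m, False)] [r m]"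
proof -
  assume v: "1 \<le> m" "m \<le> n - 1"
  have "EQ n [(Rho m, False)] ([(Rho m, False)] @ [r m, r m] @ [])"
    by (rule rwb[OF B_rr[OF v]]) simp
  also have "EQ n ... ([] @ [] @ [r m])"
    using pres_eq.cancel[of "tvb_rels n" "[]" "Rho m" False "[r m]"] by simp
  finally show ?thesis by simp
qed

lemma rev_rhob: "rev (rhob c L) = rhob c (rev L)"
  by (simp add: rhob_def rev_map)

lemma rhob_append: "rhob c (L @ M) = rhob c L @ rhob c M"
  by (simp add: rhob_def)

lemma rhob_Cons: "rhob c (x # L) = (Rho x, c) # rhob c L"
  by (simp add: rhob_def)

lemma rhob_Nil: "rhob c [] = []"
  by (simp add: rhob_def)

lemma S1: "1 \<le> m \<Longrightarrow> m \<le> n - 1 \<Longrightarrow> (\<forall>x\<in>set L. 1 \<le> x \<and> x \<le> n - 1 \<and> (x + 2 \<le> m \<or> m + 2 \<le> x))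
  \<Longrightarrow> EQ n ([r m] @ rhob True L) (rhob True L @ [r m])"
proof (induction L)
  case Nil then show ?case by (simp add: rhob_def pe_refl)
next
  case (Cons x L)
  have "EQ n ([r m] @ rhob True (x # L)) ([] @ [r x, r m] @ rhob True L)"
    by (rule rw[OF B_rfar]) (use Cons.prems in \<open>auto simp: rhob_def\<close>)
  also have "EQ n ... ([r x] @ (rhob True L @ [r m]) @ [])"
    by (rule rw[OF Cons.IH]) (use Cons.prems in \<open>auto simp: rhob_def\<close>)
  finally show ?case by (simp add: rhob_def)
qed

lemma S1': "1 \<le> m \<Longrightarrow> m \<le> n - 1 \<Longrightarrow> (\<forall>x\<in>set L. 1 \<le> x \<and> x \<le> n - 1 \<and> (x + 2 \<le> m \<or> m + 2 \<le> x))
  \<Longrightarrow> EQ n (rhob True L @ [r m]) ([r m] @ rhob True L)"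
  by (rule pe_sym, rule S1) auto

lemma upt_split3: "a \<le> m \<Longrightarrow> m < b \<Longrightarrow> [a..<b] = [a..<m] @ m # [Suc m..<b]"
proof -
  assume h: "a \<le> m" "m < b"
  have "[a..<b] = [a..<m] @ [m..<b]" using upt_add_eq_append[of a m "b - m"] h by simp
  then show ?thesis using upt_conv_Cons[OF h(2)] by simp
qed

lemma S2: assumes "1 \<le> a" "a \<le> m" "Suc m < b" "b \<le> n"
  shows "EQ n ([r m] @ rhob True (rev [a..<b])) (rhob True (rev [a..<b]) @ [r (Suc m)])"
proof -
  have sp: "[a..<b] = [a..<m] @ m # Suc m # [Suc (Suc m)..<b]"
    using upt_split3[of a m b] upt_conv_Cons[of "Suc m" b] assms by simp
  define A where "A = rhob True (rev [Suc (Suc m)..<b])"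
  define B where "B = rhob True (rev [a..<m])"
  have e: "rhob True (rev [a..<b]) = A @ [r (Suc m), r m] @ B"
    unfolding A_def B_def sp by (simp add: rhob_def)
  have vm: "1 \<le> m" "m \<le> n - 1" "Suc m \<le> n - 1" using assms by auto
  have "EQ n ([r m] @ A @ [r (Suc m), r m] @ B) ([] @ (A @ [r m]) @ [r (Suc m), r m] @ B)"
    by (rule rw[OF S1[of m n "rev [Suc (Suc m)..<b]", folded A_def]]) (use assms vm in auto)
  also have "EQ n ... (A @ [r (Suc m), r m, r (Suc m)] @ B)"
    by (rule rw[OF B_rbraid[OF vm(1,3)], where u=A and v=B]) simp
  also have "EQ n ... ((A @ [r (Suc m), r m]) @ (B @ [r (Suc m)]) @ [])"
    by (rule rw[OF S1[of "Suc m" n "rev [a..<m]", folded B_def]]) (use assms vm in auto)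
  finally show ?thesis unfolding e by simp
qed

lemma S2': assumes "1 \<le> a" "a \<le> m" "Suc m < b" "b \<le> n"
  shows "EQ n (rhob True [a..<b] @ [r m]) ([r (Suc m)] @ rhob True [a..<b])"
proof -
  have sp: "[a..<b] = [a..<m] @ m # Suc m # [Suc (Suc m)..<b]"
    using upt_split3[of a m b] upt_conv_Cons[of "Suc m" b] assms by simp
  define A where "A = rhob True [Suc (Suc m)..<b]"
  define B where "B = rhob True [a..<m]"
  have e: "rhob True [a..<b] = B @ [r m, r (Suc m)] @ A"
    unfolding A_def B_def sp by (simp add: rhob_def)
  have vm: "1 \<le> m" "m \<le> n - 1" "Suc m \<le> n - 1" using assms by auto
  have "EQ n (B @ [r m, r (Suc m)] @ A @ [r m]) ((B @ [r m, r (Suc m)]) @ ([r m] @ A) @ [])"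
    by (rule rw[OF S1'[of m n "[Suc (Suc m)..<b]", folded A_def]]) (use assms vm in auto)
  also have "EQ n ... (B @ [r (Suc m), r m, r (Suc m)] @ A)"
    by (rule rw[OF B_rbraid[OF vm(1,3)], where u=B and v=A]) simp
  also have "EQ n ... ([] @ ([r (Suc m)] @ B) @ [r m, r (Suc m)] @ A)"
    by (rule rw[OF S1'[of "Suc m" n "[a..<m]", folded B_def]]) (use assms vm in auto)
  finally show ?thesis unfolding e by simp
qed

lemma K2: assumes "1 \<le> m" "m \<le> n - 1" "1 \<le> j" "j \<le> n"
  shows "EQ n [r m, g j, r m] [g (transpose m (Suc m) j)]"
proof -
  consider "j = m" | "j = Suc m" | "j \<noteq> m \<and> j \<noteq> Suc m" by blast
  then show ?thesis
  proof cases
    case 1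
    have "EQ n [r m, g j, r m] ([] @ [g (Suc m), r m] @ [r m])"
      by (rule rw[OF B_rg[OF assms(1,2)]]) (simp add: 1)
    also have "EQ n ... ([g (Suc m)] @ [] @ [])"
      by (rule rw[OF B_rr[OF assms(1,2)]]) simp
    finally show ?thesis using 1 by simp
  next
    case 2
    have "EQ n [r m, g j, r m] ([r m] @ [r m, g m] @ [])"
      by (rule rwb[OF B_rg[OF assms(1,2)]]) (simp add: 2)
    also have "EQ n ... ([] @ [] @ [g m])"
      by (rule rw[OF B_rr[OF assms(1,2)]]) simp
    finally show ?thesis using 2 by simp
  next
    case 3
    have "EQ n [r m, g j, r m] ([] @ [g j, r m] @ [r m])"
      by (rule rwb[OF B_grfar]) (use assms 3 in auto)
    also have "EQ n ... ([g j] @ [] @ [])"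
      by (rule rw[OF B_rr[OF assms(1,2)]]) simp
    finally show ?thesis using 3 by simp
  qed
qed


definition Y :: "bool \<Rightarrow> nat \<Rightarrow> tvb_gen word" where
  "Y c p = (if c then [s p] else [r p, s p, r p])"

lemma T_c: assumes "1 \<le> p" "Suc p \<le> n - 1"
  shows "EQ n ([r p, r (Suc p)] @ Y c p @ [r (Suc p), r p]) (Y c (Suc p))"
proof -
  have v: "p \<le> n - 1" using assms by simp
  have T: "EQ n [r p, r (Suc p), s p, r (Suc p), r p] [s (Suc p)]"
  proof -
    have "EQ n [r p, r (Suc p), s p, r (Suc p), r p] ([] @ [s (Suc p), r p, r (Suc p)] @ [r (Suc p), r p])"
      by (rule rw[OF B_rrs[OF assms]]) simp
    also have "EQ n ... ([s (Suc p), r p] @ [] @ [r p])"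
      by (rule rw[OF B_rr[OF _ assms(2)]]) (use assms in simp_all)
    also have "EQ n ... ([s (Suc p)] @ [] @ [])"
      by (rule rw[OF B_rr[OF assms(1) v]]) simp
    finally show ?thesis by simp
  qed
  show ?thesis
  proof (cases c)
    case True then show ?thesis using T by (simp add: Y_def)
  next
    case False
    have "EQ n [r p, r (Suc p), r p, s p, r p, r (Suc p), r p] ([] @ [r (Suc p), r p, r (Suc p)] @ [s p, r p, r (Suc p), r p])"
      by (rule rw[OF B_rbraid[OF assms]]) simp
    also have "EQ n ... ([r (Suc p), r p, r (Suc p), s p] @ [r (Suc p), r p, r (Suc p)] @ [])"
      by (rule rw[OF B_rbraid[OF assms]]) simp
    also have "EQ n ... ([r (Suc p)] @ [s (Suc p)] @ [r (Suc p)])"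
      by (rule rw[OF T]) simp
    finally show ?thesis using False by (simp add: Y_def)
  qed
qed

lemma T_b: assumes "1 \<le> i" "Suc i \<le> n - 1"
  shows "EQ n ([r i] @ Y c (Suc i) @ [r i]) ([r (Suc i)] @ Y c i @ [r (Suc i)])"
proof -
  have v: "i \<le> n - 1" using assms by simp
  have T: "EQ n [s (Suc i)] [r i, r (Suc i), s i, r (Suc i), r i]"
    using T_c[OF assms, of True] by (simp add: Y_def pe_sym)
  show ?thesis
  proof (cases c)
    case True
    have "EQ n [r i, s (Suc i), r i] ([r i] @ [r i, r (Suc i), s i, r (Suc i), r i] @ [r i])"
      by (rule rw[OF T]) simp
    also have "EQ n ... ([] @ [] @ [r (Suc i), s i, r (Suc i), r i, r i])"
      by (rule rw[OF B_rr[OF assms(1) v]]) simp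
    also have "EQ n ... ([r (Suc i), s i, r (Suc i)] @ [] @ [])"
      by (rule rw[OF B_rr[OF assms(1) v]]) simp
    finally show ?thesis using True by (simp add: Y_def)
  next
    case False
    have "EQ n [r i, r (Suc i), s (Suc i), r (Suc i), r i] ([r i, r (Suc i)] @ [r i, r (Suc i), s i, r (Suc i), r i] @ [r (Suc i), r i])"
      by (rule rw[OF T]) simp
    also have "EQ n ... ([] @ [r (Suc i), r i, r (Suc i)] @ [r (Suc i), s i, r (Suc i), r i, r (Suc i), r i])"
      by (rule rw[OF B_rbraid[OF assms]]) simp
    also have "EQ n ... ([r (Suc i), r i] @ [] @ [s i, r (Suc i), r i, r (Suc i), r i])"
      by (rule rw[OF B_rr[OF _ assms(2)]]) (use assms in simp_all)
    also have "EQ n ... ([r (Suc i), r i, s i, r (Suc i)] @ [r (Suc i), r i, r (Suc i)] @ [])"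
      by (rule rw[OF B_rbraid[OF assms]]) simp
    also have "EQ n ... ([r (Suc i), r i, s i] @ [] @ [r i, r (Suc i)])"
      by (rule rw[OF B_rr[OF _ assms(2)]]) (use assms in simp_all)
    finally show ?thesis using False by (simp add: Y_def)
  qed
qed

lemma S3: assumes "1 \<le> j" "j \<le> n - 1" "1 \<le> p" "p \<le> n - 1" "j + 2 \<le> p \<or> p + 2 \<le> j"
  shows "EQ n ([r j] @ Y c p) (Y c p @ [r j])"
proof (cases c)
  case True
  have "EQ n [r j, s p] [s p, r j]" by (rule pe_sym, rule B_srfar) (use assms in auto)
  then show ?thesis using True by (simp add: Y_def)
next
  case False
  have "EQ n [r j, r p, s p, r p] ([] @ [r p, r j] @ [s p, r p])"
    by (rule rw[OF B_rfar]) (use assms in auto)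
  also have "EQ n ... ([r p] @ [s p, r j] @ [r p])"
    by (rule rwb[OF B_srfar]) (use assms in auto)
  also have "EQ n ... ([r p, s p] @ [r p, r j] @ [])"
    by (rule rw[OF B_rfar]) (use assms in auto)
  finally show ?thesis using False by (simp add: Y_def)
qed

definition Cw :: "nat \<Rightarrow> nat \<Rightarrow> bool \<Rightarrow> tvb_gen word" where
  "Cw p q c = rhob True (rev [Suc p..<q]) @ Y c p @ rhob True [Suc p..<q]"

lemma xword_Cw: "k \<noteq> l \<Longrightarrow> xword k l = Cw (min k l) (max k l) (k < l)"
proof -
  assume "k \<noteq> l"
  then consider "k < l" | "l < k" by linarith
  then show ?thesis
  proof cases
    case 1 then show ?thesis by (simp add: xword_lt Cw_def Y_def rev_rhob)
  next
    case 2
    then have "[l..<k] = l # [Suc l..<k]" by (simp add: upt_conv_Cons)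
    then show ?thesis using 2 by (simp add: xword_gt Cw_def Y_def rev_rhob rhob_Cons)
  qed
qed


lemma KCa: assumes "1 \<le> p" "p < q" "q \<le> n" "1 \<le> m" "m \<le> n - 1" "Suc m < p \<or> q < m"
  shows "EQ n ([r m] @ Cw p q c @ [r m]) (Cw p q c)"
proof -
  have far: "\<forall>x\<in>set (rev [Suc p..<q]). 1 \<le> x \<and> x \<le> n - 1 \<and> (x + 2 \<le> m \<or> m + 2 \<le> x)"
            "\<forall>x\<in>set [Suc p..<q]. 1 \<le> x \<and> x \<le> n - 1 \<and> (x + 2 \<le> m \<or> m + 2 \<le> x)"
    using assms by auto
  have "EQ n ([r m] @ Cw p q c @ [r m]) ([] @ (rhob True (rev [Suc p..<q]) @ [r m]) @ Y c p @ rhob True [Suc p..<q] @ [r m])"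
    by (rule rw[OF S1[OF assms(4,5) far(1)]]) (simp add: Cw_def)
  also have "EQ n ... (rhob True (rev [Suc p..<q]) @ (Y c p @ [r m]) @ rhob True [Suc p..<q] @ [r m])"
    by (rule rw[OF S3]) (use assms in auto)
  also have "EQ n ... ((rhob True (rev [Suc p..<q]) @ Y c p) @ (rhob True [Suc p..<q] @ [r m]) @ [r m])"
    by (rule rw[OF S1[OF assms(4,5) far(2)]]) simp
  also have "EQ n ... ((rhob True (rev [Suc p..<q]) @ Y c p @ rhob True [Suc p..<q]) @ [] @ [])"
    by (rule rw[OF B_rr[OF assms(4,5)]]) simp
  finally show ?thesis by (simp add: Cw_def)
qed

lemma KCb: assumes "2 \<le> p" "p < q" "q \<le> n" "m = p - 1"
  shows "EQ n ([r m] @ Cw p q c @ [r m]) (Cw m q c)"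
proof -
  have vm: "1 \<le> m" "m \<le> n - 1" "Suc m \<le> n - 1" "Suc m = p" using assms by auto
  have far: "\<forall>x\<in>set (rev [Suc p..<q]). 1 \<le> x \<and> x \<le> n - 1 \<and> (x + 2 \<le> m \<or> m + 2 \<le> x)"
            "\<forall>x\<in>set [Suc p..<q]. 1 \<le> x \<and> x \<le> n - 1 \<and> (x + 2 \<le> m \<or> m + 2 \<le> x)"
    using assms by auto
  have "EQ n ([r m] @ Cw p q c @ [r m]) ([] @ (rhob True (rev [Suc p..<q]) @ [r m]) @ Y c p @ rhob True [Suc p..<q] @ [r m])"
    by (rule rw[OF S1[OF vm(1,2) far(1)]]) (simp add: Cw_def)
  also have "EQ n ... ((rhob True (rev [Suc p..<q]) @ [r m] @ Y c p) @ ([r m] @ rhob True [Suc p..<q]) @ [])"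
    by (rule rw[OF S1'[OF vm(1,2) far(2)]]) simp
  also have "EQ n ... (rhob True (rev [Suc p..<q]) @ ([r (Suc m)] @ Y c m @ [r (Suc m)]) @ rhob True [Suc p..<q])"
    by (rule rw[OF T_b[OF vm(1,3), of c]]) (simp add: vm(4))
  also have "rhob True (rev [Suc p..<q]) @ ([r (Suc m)] @ Y c m @ [r (Suc m)]) @ rhob True [Suc p..<q] = Cw m q c"
  proof -
    have "[Suc m..<q] = p # [Suc p..<q]" using assms vm(4) by (simp add: upt_conv_Cons)
    then show ?thesis by (simp add: Cw_def rhob_def vm(4))
  qed
  finally show ?thesis .
qed

lemma KCc1: assumes "1 \<le> p" "Suc p \<le> n"
  shows "EQ n ([r p] @ Cw p (Suc p) c @ [r p]) (Cw p (Suc p) (\<not> c))"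
proof (cases c)
  case True then show ?thesis by (simp add: Cw_def Y_def rhob_def pe_refl)
next
  case False
  have v: "p \<le> n - 1" using assms by simp
  have "EQ n [r p, r p, s p, r p, r p] ([] @ [] @ [s p, r p, r p])"
    by (rule rw[OF B_rr[OF assms(1) v]]) simp
  also have "EQ n ... ([s p] @ [] @ [])"
    by (rule rw[OF B_rr[OF assms(1) v]]) simp
  finally show ?thesis using False by (simp add: Cw_def Y_def rhob_def)
qed

lemma KCc2: assumes "1 \<le> p" "Suc p < q" "q \<le> n"
  shows "EQ n ([r p] @ Cw p q c @ [r p]) (Cw (Suc p) q c)"
proof -
  have v: "p \<le> n - 1" "Suc p \<le> n - 1" using assms by auto
  have e: "[Suc p..<q] = Suc p # [Suc (Suc p)..<q]" using assms by (simp add: upt_conv_Cons)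
  define L where "L = [Suc (Suc p)..<q]"
  have far: "\<forall>x\<in>set (rev L). 1 \<le> x \<and> x \<le> n - 1 \<and> (x + 2 \<le> p \<or> p + 2 \<le> x)"
            "\<forall>x\<in>set L. 1 \<le> x \<and> x \<le> n - 1 \<and> (x + 2 \<le> p \<or> p + 2 \<le> x)"
    using assms by (auto simp: L_def)
  have "EQ n ([r p] @ Cw p q c @ [r p]) ([] @ (rhob True (rev L) @ [r p]) @ [r (Suc p)] @ Y c p @ [r (Suc p)] @ rhob True L @ [r p])"
    by (rule rw[OF S1[OF assms(1) v(1) far(1)]]) (simp add: Cw_def e L_def[symmetric] rhob_def)
  also have "EQ n ... ((rhob True (rev L) @ [r p, r (Suc p)] @ Y c p @ [r (Suc p)]) @ ([r p] @ rhob True L) @ [])"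
    by (rule rw[OF S1'[OF assms(1) v(1) far(2)]]) simp
  also have "EQ n ... (rhob True (rev L) @ Y c (Suc p) @ rhob True L)"
    by (rule rw[OF T_c[OF assms(1) v(2)], where u="rhob True (rev L)" and v="rhob True L"]) simp
  finally show ?thesis by (simp add: Cw_def L_def)
qed

lemma KCd: assumes "1 \<le> p" "p < m" "Suc m < q" "q \<le> n"
  shows "EQ n ([r m] @ Cw p q c @ [r m]) (Cw p q c)"
proof -
  have v: "1 \<le> m" "m \<le> n - 1" "Suc m \<le> n - 1" "p \<le> n - 1" using assms by auto
  have "EQ n ([r m] @ Cw p q c @ [r m]) ([] @ (rhob True (rev [Suc p..<q]) @ [r (Suc m)]) @ Y c p @ rhob True [Suc p..<q] @ [r m])"
    by (rule rw[OF S2]) (use assms in \<open>simp_all add: Cw_def\<close>)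
  also have "EQ n ... ((rhob True (rev [Suc p..<q]) @ [r (Suc m)] @ Y c p) @ ([r (Suc m)] @ rhob True [Suc p..<q]) @ [])"
    by (rule rw[OF S2']) (use assms in simp_all)
  also have "EQ n ... (rhob True (rev [Suc p..<q]) @ (Y c p @ [r (Suc m)]) @ [r (Suc m)] @ rhob True [Suc p..<q])"
    by (rule rw[OF S3]) (use assms v in auto)
  also have "EQ n ... ((rhob True (rev [Suc p..<q]) @ Y c p) @ [] @ rhob True [Suc p..<q])"
    by (rule rw[OF B_rr]) (use v in simp_all)
  finally show ?thesis by (simp add: Cw_def)
qed

lemma KCe: assumes "1 \<le> p" "Suc p < q" "q \<le> n" "m = q - 1"
  shows "EQ n ([r m] @ Cw p q c @ [r m]) (Cw p m c)"
proof -
  have v: "1 \<le> m" "m \<le> n - 1" using assms by auto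
  have q: "q = Suc m" using assms by simp
  have e: "[Suc p..<q] = [Suc p..<m] @ [m]" using assms unfolding q by simp
  have "EQ n ([r m] @ Cw p q c @ [r m]) ([] @ [] @ Cw p m c @ [r m, r m])"
    by (rule rw[OF B_rr[OF v]]) (simp add: Cw_def e rhob_def)
  also have "EQ n ... (Cw p m c @ [] @ [])"
    by (rule rw[OF B_rr[OF v]]) simp
  finally show ?thesis by simp
qed

lemma KCf: assumes "p < q"
  shows "[r q] @ Cw p q c @ [r q] = Cw p (Suc q) c"
  using assms by (simp add: Cw_def rhob_def)


lemma K1: assumes "1 \<le> m" "m \<le> n - 1" "1 \<le> k" "k \<le> n" "1 \<le> l" "l \<le> n" "k \<noteq> l"
  shows "EQ n ([r m] @ xword k l @ [r m]) (xword (transpose m (Suc m) k) (transpose m (Suc m) l))"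
proof -
  define p where "p = min k l"
  define q where "q = max k l"
  define c where "c = (k < l)"
  have x: "xword k l = Cw p q c" using assms(7) by (simp add: xword_Cw p_def q_def c_def)
  have pq: "1 \<le> p" "p < q" "q \<le> n" using assms by (auto simp: p_def q_def)
  have tne: "transpose m (Suc m) k \<noteq> transpose m (Suc m) l" using assms(7) transpose_eq_imp_eq by metis
  have X: "xword (transpose m (Suc m) k) (transpose m (Suc m) l) =
     Cw (min (transpose m (Suc m) k) (transpose m (Suc m) l)) (max (transpose m (Suc m) k) (transpose m (Suc m) l))
        (transpose m (Suc m) k < transpose m (Suc m) l)"
    using tne by (rule xword_Cw)
  consider (a) "Suc m < p \<or> q < m" | (b) "Suc m = p" | (c1) "m = p" "q = Suc p" | (c2) "m = p" "Suc p < q"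
    | (d) "p < m" "Suc m < q" | (e) "p < m" "Suc m = q" | (f) "m = q"
    using pq by linarith
  then show ?thesis
  proof cases
    case a
    then have "xword (transpose m (Suc m) k) (transpose m (Suc m) l) = Cw p q c"
      unfolding X using pq by (auto simp: transpose_def p_def q_def c_def)
    then show ?thesis unfolding x using KCa[OF pq assms(1,2) a] by simp
  next
    case b
    then have "xword (transpose m (Suc m) k) (transpose m (Suc m) l) = Cw m q c"
      unfolding X using pq by (auto simp: transpose_def p_def q_def c_def)
    moreover have b2: "2 \<le> p" "m = p - 1" using b assms(1) by auto
    ultimately show ?thesis unfolding x using KCb[OF b2(1) pq(2,3) b2(2), of c] by simp
  next
    case c1
    then have "xword (transpose m (Suc m) k) (transpose m (Suc m) l) = Cw p (Suc p) (\<not> c)"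
      unfolding X using pq by (auto simp: transpose_def p_def q_def c_def)
    then show ?thesis unfolding x using KCc1[of p n c] pq c1 by simp
  next
    case c2
    then have "xword (transpose m (Suc m) k) (transpose m (Suc m) l) = Cw (Suc p) q c"
      unfolding X using pq by (auto simp: transpose_def p_def q_def c_def)
    then show ?thesis unfolding x using KCc2[of p q n c] pq c2 by simp
  next
    case d
    then have "xword (transpose m (Suc m) k) (transpose m (Suc m) l) = Cw p q c"
      unfolding X using pq by (auto simp: transpose_def p_def q_def c_def)
    then show ?thesis unfolding x using KCd[of p m q n c] pq d by simp
  next
    case e
    then have "xword (transpose m (Suc m) k) (transpose m (Suc m) l) = Cw p m c"
      unfolding X using pq by (auto simp: transpose_def p_def q_def c_def)
    moreover have e2: "Suc p < q" "m = q - 1" using e by auto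
    ultimately show ?thesis unfolding x using KCe[OF pq(1) e2(1) pq(3) e2(2), of c] by simp
  next
    case f
    then have "xword (transpose m (Suc m) k) (transpose m (Suc m) l) = Cw p (Suc q) c"
      unfolding X using pq by (auto simp: transpose_def p_def q_def c_def)
    then show ?thesis unfolding x using KCf[of p q c] pq f by (simp add: pe_refl)
  qed
qed




definition vq :: "nat \<Rightarrow> nat list \<Rightarrow> bool" where
  "vq n qs = (\<forall>x\<in>set qs. 1 \<le> x \<and> x \<le> n - 1)"

definition pm :: "nat \<Rightarrow> nat list \<Rightarrow> nat \<Rightarrow> nat" where
  "pm n qs = st n id (rhob True qs)"

lemma st_comp: "st n (f \<circ> p) w = f \<circ> st n p w"
proof (induction w arbitrary: p)
  case Nil then show ?case by simp
next
  case (Cons a w)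
  obtain x b where a: "a = (x, b)" by (cases a)
  show ?case
  proof (cases x)
    case (Rho i)
    have "st n ((f \<circ> p) \<circ> transpose i (Suc i)) w = f \<circ> st n (p \<circ> transpose i (Suc i)) w"
      using Cons.IH[of "p \<circ> transpose i (Suc i)"] by (metis comp_assoc)
    then show ?thesis using Cons.IH[of p] unfolding a Rho st.simps
      by (cases "1 \<le> i \<and> i \<le> n - 1") (simp_all only: if_True if_False simp_thms)
  qed (simp_all only: a st.simps Cons.IH)
qed

lemma pm_Nil: "pm n [] = id" by (simp add: pm_def rhob_def)

lemma pm_Cons: "1 \<le> q \<Longrightarrow> q \<le> n - 1 \<Longrightarrow> pm n (q # qs) = transpose q (Suc q) \<circ> pm n qs"
  using st_comp[of n "transpose q (Suc q)" id "rhob True qs"] by (simp add: pm_def rhob_def)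

lemma pm_append: "pm n (qs @ qs') = pm n qs \<circ> pm n qs'"
  using st_comp[of n "pm n qs" id "rhob True qs'"] by (simp add: pm_def rhob_append st_append)

lemma PP_pm: "PP n (pm n qs)"
  unfolding pm_def by (rule PP_st[OF PP_id])

lemma vq_Cons: "vq n (q # qs) = (1 \<le> q \<and> q \<le> n - 1 \<and> vq n qs)"
  by (auto simp: vq_def)
lemma vq_append: "vq n (qs @ qs') = (vq n qs \<and> vq n qs')"
  by (auto simp: vq_def)
lemma vq_rev: "vq n (rev qs) = vq n qs"
  by (auto simp: vq_def)

lemma rr_cancel: "vq n qs \<Longrightarrow> EQ n (rhob True qs @ rhob True (rev qs)) []"
proof (induction qs)
  case Nil then show ?case by (simp add: rhob_def pe_refl)
next
  case (Cons q qs)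
  then have v: "1 \<le> q" "q \<le> n - 1" "vq n qs" by (auto simp: vq_Cons)
  have "EQ n (rhob True (q # qs) @ rhob True (rev (q # qs))) ([r q] @ [] @ [r q])"
    by (rule rw[OF Cons.IH[OF v(3)]]) (simp add: rhob_def)
  also have "EQ n ... []" using B_rr[OF v(1,2)] by simp
  finally show ?case .
qed

lemma rr_cancel': "vq n qs \<Longrightarrow> EQ n (rhob True (rev qs) @ rhob True qs) []"
  using rr_cancel[of n "rev qs"] by (simp add: vq_rev)

lemma rhob_False: "vq n qs \<Longrightarrow> EQ n (rhob False qs) (rhob True qs)"
proof (induction qs)
  case Nil then show ?case by (simp add: rhob_def pe_refl)
next
  case (Cons q qs)
  then have v: "1 \<le> q" "q \<le> n - 1" "vq n qs" by (auto simp: vq_Cons)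
  show ?case using pe_app[OF K3[OF v(1,2)] Cons.IH[OF v(3)]] by (simp add: rhob_def)
qed

lemma w_inv_cancel: "pres_eq R (w @ inv_word w) []"
proof (induction w)
  case Nil then show ?case by (simp add: inv_word_def pe_refl)
next
  case (Cons a w)
  obtain x b where a: "a = (x, b)" by (cases a)
  have e: "(a # w) @ inv_word (a # w) = [a] @ (w @ inv_word w) @ [(x, \<not> b)]"
    by (simp add: inv_word_def a)
  have "pres_eq R ((a # w) @ inv_word (a # w)) ([a] @ [] @ [(x, \<not> b)])"
    unfolding e by (rule pe_ctx[OF Cons.IH])
  also have "pres_eq R ... []" using pe_cancel[of R x b] by (simp add: a)
  finally show ?case .
qed

lemma inv_inv_word: "inv_word (inv_word w) = w"
  by (simp add: inv_word_def rev_map comp_def case_prod_beta)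

lemma inv_w_cancel: "pres_eq R (inv_word w @ w) []"
  using w_inv_cancel[of R "inv_word w"] by (simp add: inv_inv_word)

lemma pe_inv: assumes "pres_eq R a b" shows "pres_eq R (inv_word a) (inv_word b)"
proof -
  have "pres_eq R (inv_word a) (inv_word a @ [] @ [])" by (simp add: pe_refl)
  also have "pres_eq R ... (inv_word a @ (b @ inv_word b) @ [])"
    by (rule pe_ctx, rule pe_sym, rule w_inv_cancel)
  also have "pres_eq R ... (inv_word a @ (a @ inv_word b) @ [])"
    by (rule pe_ctx, rule pe_app[OF pe_sym[OF assms] pe_refl])
  also have "pres_eq R ... ([] @ [] @ inv_word b)"
    using pe_ctx[OF inv_w_cancel[of R a], of "[]" "inv_word b"] by simp
  finally show ?thesis by simp
qed

lemma CONJx: "vq n qs \<Longrightarrow> 1 \<le> k \<Longrightarrow> k \<le> n \<Longrightarrow> 1 \<le> l \<Longrightarrow> l \<le> n \<Longrightarrow> k \<noteq> l \<Longrightarrow>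
  EQ n (rhob True qs @ xword k l @ rhob True (rev qs)) (xword (pm n qs k) (pm n qs l))"
proof (induction qs)
  case Nil then show ?case by (simp add: rhob_def pm_Nil pe_refl)
next
  case (Cons q qs)
  then have v: "1 \<le> q" "q \<le> n - 1" "vq n qs" by (auto simp: vq_Cons)
  have i1: "inrange n (pm n qs k)" using PP_in[OF PP_pm[of n qs]] Cons.prems by blast
  have i2: "inrange n (pm n qs l)" using PP_in[OF PP_pm[of n qs]] Cons.prems by blast
  have i3: "pm n qs k \<noteq> pm n qs l" using PP_ne[OF PP_pm[of n qs]] Cons.prems by blast
  have pk: "1 \<le> pm n qs k" "pm n qs k \<le> n" "1 \<le> pm n qs l" "pm n qs l \<le> n" "pm n qs k \<noteq> pm n qs l"
    using i1 i2 i3 unfolding inrange_def by blast+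
  have "EQ n (rhob True (q # qs) @ xword k l @ rhob True (rev (q # qs)))
     ([r q] @ xword (pm n qs k) (pm n qs l) @ [r q])"
    by (rule rw[OF Cons.IH[OF v(3) Cons.prems(2-)]]) (simp add: rhob_def)
  also have "EQ n ... (xword (pm n (q # qs) k) (pm n (q # qs) l))"
    using K1[OF v(1,2) pk] by (simp add: pm_Cons[OF v(1,2)])
  finally show ?case .
qed

lemma CONJg: "vq n qs \<Longrightarrow> 1 \<le> j \<Longrightarrow> j \<le> n \<Longrightarrow>
  EQ n (rhob True qs @ [g j] @ rhob True (rev qs)) [g (pm n qs j)]"
proof (induction qs)
  case Nil then show ?case by (simp add: rhob_def pm_Nil pe_refl)
next
  case (Cons q qs)
  then have v: "1 \<le> q" "q \<le> n - 1" "vq n qs" by (auto simp: vq_Cons)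
  have i1: "inrange n (pm n qs j)" using PP_in[OF PP_pm[of n qs]] Cons.prems by blast
  have pk: "1 \<le> pm n qs j" "pm n qs j \<le> n" using i1 unfolding inrange_def by blast+
  have "EQ n (rhob True (q # qs) @ [g j] @ rhob True (rev (q # qs)))
     ([r q] @ [g (pm n qs j)] @ [r q])"
    by (rule rw[OF Cons.IH[OF v(3) Cons.prems(2-)]]) (simp add: rhob_def)
  also have "EQ n ... [g (pm n (q # qs) j)]"
    using K2[OF v(1,2) pk] by (simp add: pm_Cons[OF v(1,2)])
  finally show ?case .
qed

definition imgs :: "bool \<Rightarrow> tvh_gen \<Rightarrow> tvb_gen word" where
  "imgs b y = (if b then tvh_img y else inv_word (tvh_img y))"

lemma subst_Cons: "subst ((y, b) # v) = imgs b y @ subst v"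
  by (simp add: subst_def imgs_def)
lemma subst_Nil: "subst [] = []"
  by (simp add: subst_def)
lemma subst_append: "subst (u @ v) = subst u @ subst v"
  by (simp add: subst_def)

lemma CONJ_img_pos: "vq n qs \<Longrightarrow> tvh_valid_gen n y \<Longrightarrow>
  EQ n (rhob True qs @ tvh_img y @ rhob True (rev qs)) (tvh_img (ren (pm n qs) y))"
proof -
  assume h: "vq n qs" "tvh_valid_gen n y"
  show ?thesis
  proof (cases y)
    case (X k l)
    then show ?thesis using h CONJx[OF h(1), of k l] by (simp add: tvh_valid_gen_def tvh_img_def)
  next
    case (G j)
    then show ?thesis using h CONJg[OF h(1), of j] by (simp add: tvh_valid_gen_def tvh_img_def)
  qed
qed

lemma CONJ_img: "vq n qs \<Longrightarrow> tvh_valid_gen n y \<Longrightarrow>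
  EQ n (rhob True qs @ imgs b y @ rhob True (rev qs)) (imgs b (ren (pm n qs) y))"
proof (cases b)
  case True
  assume "vq n qs" "tvh_valid_gen n y"
  then show ?thesis using True CONJ_img_pos by (simp add: imgs_def)
next
  case False
  assume h: "vq n qs" "tvh_valid_gen n y"
  have "EQ n (rhob True qs @ inv_word (tvh_img y) @ rhob True (rev qs))
             (rhob False qs @ inv_word (tvh_img y) @ rhob False (rev qs))"
    using h(1) by (intro pe_app[OF pe_sym[OF rhob_False] pe_app[OF pe_refl pe_sym[OF rhob_False]]]) (simp_all add: vq_rev)
  also have "rhob False qs @ inv_word (tvh_img y) @ rhob False (rev qs) =
     inv_word (rhob True qs @ tvh_img y @ rhob True (rev qs))"
    by (simp add: inv_word_append inv_word_rhob rev_rhob)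
  also have "EQ n ... (inv_word (tvh_img (ren (pm n qs) y)))"
    by (rule pe_inv, rule CONJ_img_pos[OF h])
  finally show ?thesis using False by (simp add: imgs_def)
qed

definition mren :: "(nat \<Rightarrow> nat) \<Rightarrow> tvh_gen word \<Rightarrow> tvh_gen word" where
  "mren p v = map (\<lambda>(y, b). (ren p y, b)) v"

lemma CONJ_subst: "vq n qs \<Longrightarrow> valid_tvh n v \<Longrightarrow>
  EQ n (rhob True qs @ subst v @ rhob True (rev qs)) (subst (mren (pm n qs) v))"
proof (induction v)
  case Nil then show ?case by (simp add: subst_Nil mren_def rr_cancel)
next
  case (Cons a v)
  obtain y b where a: "a = (y, b)" by (cases a)
  have vy: "tvh_valid_gen n y" and vv: "valid_tvh n v" using Cons.prems a by (auto simp: valid_tvh_def)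
  have "EQ n (rhob True qs @ subst (a # v) @ rhob True (rev qs))
     ((rhob True qs @ imgs b y) @ (rhob True (rev qs) @ rhob True qs) @ subst v @ rhob True (rev qs))"
    by (rule rwb[OF rr_cancel'[OF Cons.prems(1)]]) (simp add: a subst_Cons)
  also have "EQ n ... ((rhob True qs @ imgs b y @ rhob True (rev qs)) @ (rhob True qs @ subst v @ rhob True (rev qs)))"
    by (simp add: pe_refl)
  also have "EQ n ... (imgs b (ren (pm n qs) y) @ subst (mren (pm n qs) v))"
    by (rule pe_app[OF CONJ_img[OF Cons.prems(1) vy] Cons.IH[OF Cons.prems(1) vv]])
  finally show ?case by (simp add: a mren_def subst_Cons)
qed

lemma base_lift: "vq n qs \<Longrightarrow> valid_tvh n l0 \<Longrightarrow> valid_tvh n q0 \<Longrightarrow> EQ n (subst l0) (subst q0) \<Longrightarrow>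
   EQ n (subst (mren (pm n qs) l0)) (subst (mren (pm n qs) q0))"
proof -
  assume h: "vq n qs" "valid_tvh n l0" "valid_tvh n q0" "EQ n (subst l0) (subst q0)"
  have "EQ n (subst (mren (pm n qs) l0)) (rhob True qs @ subst l0 @ rhob True (rev qs))"
    by (rule pe_sym, rule CONJ_subst[OF h(1,2)])
  also have "EQ n ... (rhob True qs @ subst q0 @ rhob True (rev qs))"
    by (rule pe_ctx[OF h(4)])
  also have "EQ n ... (subst (mren (pm n qs) q0))"
    by (rule CONJ_subst[OF h(1,3)])
  finally show ?thesis .
qed




lemma trans_exists: "1 \<le> a \<Longrightarrow> a < b \<Longrightarrow> b \<le> n \<Longrightarrow> \<exists>qs. vq n qs \<and> pm n qs = transpose a b"
proof (induction b)
  case 0 then show ?case by simp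
next
  case (Suc b)
  show ?case
  proof (cases "a = b")
    case True
    have "vq n [a] \<and> pm n [a] = transpose a (Suc b)"
      using Suc.prems True by (simp add: vq_def pm_Cons pm_Nil)
    then show ?thesis by blast
  next
    case False
    then have ab: "a < b" using Suc.prems by simp
    obtain qs where qs: "vq n qs" "pm n qs = transpose a b" using Suc.IH[OF Suc.prems(1) ab] Suc.prems by auto
    have vb: "1 \<le> b" "b \<le> n - 1" using Suc.prems ab by auto
    have "pm n (b # qs @ [b]) = transpose b (Suc b) \<circ> transpose a b \<circ> transpose b (Suc b)"
      by (simp add: pm_Cons[OF vb] pm_append qs(2) pm_Nil comp_assoc)
    also have "\<dots> = transpose a (Suc b)"
      using ab by (auto simp: fun_eq_iff transpose_def)
    finally have "vq n (b # qs @ [b]) \<and> pm n (b # qs @ [b]) = transpose a (Suc b)"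
      using qs(1) vb by (simp add: vq_Cons vq_append vq_def)
    then show ?thesis by blast
  qed
qed

lemma tuple_exists: "distinct t \<Longrightarrow> set t \<subseteq> {1..n} \<Longrightarrow>
   \<exists>qs. vq n qs \<and> (\<forall>c<length t. pm n qs (Suc c) = t ! c)"
proof (induction t rule: rev_induct)
  case Nil
  have "vq n []" by (simp add: vq_def)
  then show ?case by auto
next
  case (snoc x t)
  have dt: "distinct t" "x \<notin> set t" and st': "set t \<subseteq> {1..n}" and xr: "x \<in> {1..n}"
    using snoc.prems by auto
  obtain qs where qs: "vq n qs" "\<forall>c<length t. pm n qs (Suc c) = t ! c" using snoc.IH[OF dt(1) st'] by blast
  define p where "p = pm n qs"
  have PPp: "PP n p" unfolding p_def by (rule PP_pm)
  have "p ` {1..n} \<subseteq> {1..n}" using PPp unfolding PP_def by auto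
  moreover have "inj_on p {1..n}" using PPp unfolding PP_def by auto
  ultimately have "p ` {1..n} = {1..n}" by (intro endo_inj_surj) auto
  then obtain z where z: "z \<in> {1..n}" "p z = x" using xr by (metis imageE)
  have zt: "Suc (length t) \<le> z"
  proof (rule ccontr)
    assume "\<not> Suc (length t) \<le> z"
    then have "z - 1 < length t" "Suc (z - 1) = z" using z by auto
    then have "p z = t ! (z - 1)" using qs(2) p_def by metis
    then have "x \<in> set t" using z \<open>z - 1 < length t\<close> by auto
    then show False using dt by simp
  qed
  show ?case
  proof (cases "z = Suc (length t)")
    case True
    have "\<forall>c<length (t @ [x]). pm n qs (Suc c) = (t @ [x]) ! c"
    proof (intro allI impI)
      fix c assume "c < length (t @ [x])"
      then consider "c < length t" | "c = length t" by fastforce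
      then show "pm n qs (Suc c) = (t @ [x]) ! c"
        by cases (use qs(2) True z p_def in \<open>auto simp: nth_append\<close>)
    qed
    then show ?thesis using qs(1) by blast
  next
    case False
    then have zt': "Suc (length t) < z" using zt by simp
    obtain qs2 where qs2: "vq n qs2" "pm n qs2 = transpose (Suc (length t)) z"
      using trans_exists[OF _ zt'] z by auto
    have "\<forall>c<length (t @ [x]). pm n (qs @ qs2) (Suc c) = (t @ [x]) ! c"
    proof (intro allI impI)
      fix c assume "c < length (t @ [x])"
      then consider "c < length t" | "c = length t" by fastforce
      then show "pm n (qs @ qs2) (Suc c) = (t @ [x]) ! c"
      proof cases
        case 1
        then have "transpose (Suc (length t)) z (Suc c) = Suc c" using zt' by (simp add: transpose_def)
        then show ?thesis using 1 qs(2) by (simp add: pm_append qs2(2) nth_append)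
      next
        case 2
        then show ?thesis using z by (simp add: pm_append qs2(2) p_def[symmetric])
      qed
    qed
    moreover have "vq n (qs @ qs2)" using qs(1) qs2(1) by (simp add: vq_append)
    ultimately show ?thesis by blast
  qed
qed

lemma length_le: "distinct t \<Longrightarrow> set t \<subseteq> {1..n} \<Longrightarrow> length t \<le> n"
  by (metis card_atLeastAtMost card_mono diff_Suc_1 distinct_card finite_atLeastAtMost)

lemma xword_adj: "xword i (Suc i) = [s i]" by (simp add: xword_def)
lemma xword_adj': "xword (Suc i) i = [r i, s i, r i]" by (simp add: xword_def)

lemma rel_subst: assumes "(l, q) \<in> tvh_rels n" shows "EQ n (subst l) (subst q)"
  using assms unfolding tvh_rels_def
proof (elim UnE CollectE exE conjE)
  fix i j k l' assume h: "(l, q) = ([xx i j, xx k l'], [xx k l', xx i j])" "inrange n i" "inrange n j"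
    "inrange n k" "inrange n l'" "distinct [i, j, k, l']"
  have st: "set [i, j, k, l'] \<subseteq> {1..n}" using h by (auto simp: inrange_def)
  obtain qs where qs: "vq n qs" "\<forall>c<length [i, j, k, l']. pm n qs (Suc c) = [i, j, k, l'] ! c"
    using tuple_exists[OF h(6) st] by blast
  have n4: "4 \<le> n" using length_le[OF h(6) st] by simp
  have pq: "pm n qs 1 = i" "pm n qs 2 = j" "pm n qs 3 = k" "pm n qs 4 = l'"
    using qs(2) by (auto simp: numeral_eq_Suc dest: spec[of _ 0] spec[of _ 1] spec[of _ 2] spec[of _ 3])
  have base: "EQ n (subst [xx 1 2, xx 3 4]) (subst [xx 3 4, xx 1 2])"
    using B_sfar[of 1 n 3] n4 by (simp add: subst_Cons subst_Nil imgs_def tvh_img_def xword_def)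
  have "EQ n (subst (mren (pm n qs) [xx 1 2, xx 3 4])) (subst (mren (pm n qs) [xx 3 4, xx 1 2]))"
    by (rule base_lift[OF qs(1) _ _ base]) (use n4 in \<open>auto simp: valid_tvh_def tvh_valid_gen_def\<close>)
  then show ?thesis using h(1) pq by (simp add: mren_def)
next
  fix i j k assume h: "(l, q) = ([xx i k, xx k j, xx i k], [xx k j, xx i k, xx k j])" "inrange n i" "inrange n j"
    "inrange n k" "distinct [i, j, k]"
  have d: "distinct [i, k, j]" using h by auto
  have st: "set [i, k, j] \<subseteq> {1..n}" using h by (auto simp: inrange_def)
  obtain qs where qs: "vq n qs" "\<forall>c<length [i, k, j]. pm n qs (Suc c) = [i, k, j] ! c"
    using tuple_exists[OF d st] by blast
  have n3: "3 \<le> n" using length_le[OF d st] by simp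
  have pq: "pm n qs 1 = i" "pm n qs 2 = k" "pm n qs 3 = j"
    using qs(2) by (auto simp: numeral_eq_Suc dest: spec[of _ 0] spec[of _ 1] spec[of _ 2])
  have base: "EQ n (subst [xx 1 2, xx 2 3, xx 1 2]) (subst [xx 2 3, xx 1 2, xx 2 3])"
    using B_ss[of 1 n] n3 by (simp add: subst_Cons subst_Nil imgs_def tvh_img_def xword_def numeral_eq_Suc)
  have "EQ n (subst (mren (pm n qs) [xx 1 2, xx 2 3, xx 1 2])) (subst (mren (pm n qs) [xx 2 3, xx 1 2, xx 2 3]))"
    by (rule base_lift[OF qs(1) _ _ base]) (use n3 in \<open>auto simp: valid_tvh_def tvh_valid_gen_def\<close>)
  then show ?thesis using h(1) pq by (simp add: mren_def)
next
  fix i assume h: "(l, q) = ([gg i, gg i], [])" "inrange n i"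
  then show ?thesis using B_gg[of i n] by (simp add: subst_Cons subst_Nil imgs_def tvh_img_def inrange_def)
next
  fix i j assume h: "(l, q) = ([gg i, gg j], [gg j, gg i])" "inrange n i" "inrange n j" "i \<noteq> j"
  then show ?thesis using B_gcomm[of i n j] by (simp add: subst_Cons subst_Nil imgs_def tvh_img_def inrange_def)
next
  fix i j k assume h: "(l, q) = ([xx i j, gg k], [gg k, xx i j])" "inrange n i" "inrange n j"
    "inrange n k" "distinct [i, j, k]"
  have st: "set [i, j, k] \<subseteq> {1..n}" using h by (auto simp: inrange_def)
  obtain qs where qs: "vq n qs" "\<forall>c<length [i, j, k]. pm n qs (Suc c) = [i, j, k] ! c"
    using tuple_exists[OF h(5) st] by blast
  have n3: "3 \<le> n" using length_le[OF h(5) st] by simp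
  have pq: "pm n qs 1 = i" "pm n qs 2 = j" "pm n qs 3 = k"
    using qs(2) by (auto simp: numeral_eq_Suc dest: spec[of _ 0] spec[of _ 1] spec[of _ 2])
  have base: "EQ n (subst [xx 1 2, gg 3]) (subst [gg 3, xx 1 2])"
    using pe_sym[OF B_gsfar[of 1 n 3]] n3 by (simp add: subst_Cons subst_Nil imgs_def tvh_img_def xword_def)
  have "EQ n (subst (mren (pm n qs) [xx 1 2, gg 3])) (subst (mren (pm n qs) [gg 3, xx 1 2]))"
    by (rule base_lift[OF qs(1) _ _ base]) (use n3 in \<open>auto simp: valid_tvh_def tvh_valid_gen_def\<close>)
  then show ?thesis using h(1) pq by (simp add: mren_def)
next
  fix i j assume h: "(l, q) = ([xx i j], [gg i, gg j, xx j i, gg j, gg i])" "inrange n i" "inrange n j" "i \<noteq> j"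
  have d: "distinct [i, j]" using h by auto
  have st: "set [i, j] \<subseteq> {1..n}" using h by (auto simp: inrange_def)
  obtain qs where qs: "vq n qs" "\<forall>c<length [i, j]. pm n qs (Suc c) = [i, j] ! c"
    using tuple_exists[OF d st] by blast
  have n2: "2 \<le> n" using length_le[OF d st] by simp
  have pq: "pm n qs 1 = i" "pm n qs 2 = j"
    using qs(2) by (auto simp: numeral_eq_Suc dest: spec[of _ 0] spec[of _ 1])
  have v1: "1 \<le> (1::nat)" "1 \<le> n - 1" "2 \<le> n" "1 \<le> n" using n2 by auto
  have "EQ n [s 1] ([] @ [g 1, g 1] @ [s 1])"
    by (rule rwb[OF B_gg[OF v1(1,4)]]) simp
  also have "EQ n ... ([g 1] @ [g 2, g 2] @ [g 1, s 1])"
    by (rule rwb[OF B_gg[of 2 n]]) (use n2 in simp_all)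
  also have "EQ n ... ([g 1, g 2, g 2, g 1, s 1] @ [g 1, g 1] @ [])"
    by (rule rwb[OF B_gg[OF v1(1,4)]]) simp
  also have "EQ n ... ([g 1, g 2, g 2, g 1, s 1, g 1] @ [g 2, g 2] @ [g 1])"
    by (rule rwb[OF B_gg[of 2 n]]) (use n2 in simp_all)
  also have "EQ n ... ([g 1, g 2] @ [r 1, s 1, r 1] @ [g 2, g 1])"
    by (rule rwb[OF B_rsr[OF v1(1,2)]]) (simp add: numeral_eq_Suc)
  finally have base: "EQ n (subst [xx 1 2]) (subst [gg 1, gg 2, xx 2 1, gg 2, gg 1])"
    by (simp add: subst_Cons subst_Nil imgs_def tvh_img_def xword_def numeral_eq_Suc)
  have "EQ n (subst (mren (pm n qs) [xx 1 2])) (subst (mren (pm n qs) [gg 1, gg 2, xx 2 1, gg 2, gg 1]))"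
    by (rule base_lift[OF qs(1) _ _ base]) (use n2 in \<open>auto simp: valid_tvh_def tvh_valid_gen_def\<close>)
  then show ?thesis using h(1) pq by (simp add: mren_def)
qed

theorem if_dir: "pres_eq (tvh_rels n) v1 v2 \<Longrightarrow> EQ n (subst v1) (subst v2)"
proof (induction rule: pres_eq.induct)
  case (refl w) then show ?case by (rule pe_refl)
next
  case (sym x w) then show ?case by (blast intro: pe_sym)
next
  case (trans x y w) then show ?case by (blast intro: pres_eq.trans)
next
  case (cancel u a b v)
  have c: "EQ n (imgs b a @ imgs (\<not> b) a) []"
    by (cases b) (simp_all add: imgs_def w_inv_cancel inv_w_cancel)
  show ?case using pe_ctx[OF c, of "subst u" "subst v"] by (simp add: subst_append subst_Cons subst_Nil)
next
  case (rel l q u v)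
  show ?case using pe_ctx[OF rel_subst[OF rel], of "subst u" "subst v"] by (simp add: subst_append)
qed




fun rl :: "tvb_gen word \<Rightarrow> nat list" where
  "rl [] = []"
| "rl ((Rho i, b) # w) = i # rl w"
| "rl ((Sig i, b) # w) = rl w"
| "rl ((Gam j, b) # w) = rl w"

lemma valid_Cons: "valid_tvb n ((x, b) # w) = (tvb_valid_gen n x \<and> valid_tvb n w)"
  by (auto simp: valid_tvb_def)

lemma imgs_sig: "imgs b (X i (Suc i)) = [(Sig i, b)]"
  by (simp add: imgs_def tvh_img_def xword_def inv_word_def)
lemma imgs_gam: "imgs b (G j) = [(Gam j, b)]"
  by (simp add: imgs_def tvh_img_def inv_word_def)

lemma move_letter: assumes "vq n qs" "tvh_valid_gen n y" "imgs b y = [a]"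
  shows "EQ n (rhob True qs @ [a]) (imgs b (ren (pm n qs) y) @ rhob True qs)"
proof -
  have "EQ n (rhob True qs @ [a]) ((rhob True qs @ [a]) @ (rhob True (rev qs) @ rhob True qs) @ [])"
    by (rule rwb[OF rr_cancel'[OF assms(1)]]) simp
  also have "EQ n ... ([] @ (rhob True qs @ imgs b y @ rhob True (rev qs)) @ rhob True qs)"
    using assms(3) by (simp add: pe_refl)
  also have "EQ n ... ([] @ imgs b (ren (pm n qs) y) @ rhob True qs)"
    by (rule rw[OF CONJ_img[OF assms(1,2)]]) simp
  finally show ?thesis by simp
qed

lemma Pt2: "valid_tvb n w \<Longrightarrow> vq n qs \<Longrightarrow>
  EQ n (rhob True qs @ w) (subst (tau n (pm n qs) w) @ rhob True (qs @ rl w))"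
proof (induction w arbitrary: qs)
  case Nil then show ?case by (simp add: subst_Nil pe_refl)
next
  case (Cons a w)
  obtain x b where a: "a = (x, b)" by (cases a)
  have vx: "tvb_valid_gen n x" and vw: "valid_tvb n w" using Cons.prems(1) a by (auto simp: valid_Cons)
  show ?case
  proof (cases x)
    case (Sig i)
    then have vi: "1 \<le> i" "i \<le> n - 1" using vx by (auto simp: tvb_valid_gen_def)
    have vy: "tvh_valid_gen n (X i (Suc i))" using vi by (auto simp: tvh_valid_gen_def)
    have "EQ n (rhob True qs @ (a # w)) ((rhob True qs @ [a]) @ w)" by (simp add: pe_refl)
    also have "EQ n ... (imgs b (X (pm n qs i) (pm n qs (Suc i))) @ rhob True qs @ w)"
      using pe_app[OF move_letter[OF Cons.prems(2) vy, of b a] pe_refl[of _ w]] by (simp add: imgs_sig a Sig)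
    also have "EQ n ... (imgs b (X (pm n qs i) (pm n qs (Suc i))) @ subst (tau n (pm n qs) w) @ rhob True (qs @ rl w))"
      by (rule pe_app[OF pe_refl Cons.IH[OF vw Cons.prems(2)]])
    finally show ?thesis using vi by (simp add: a Sig subst_Cons subst_append)
  next
    case (Gam j)
    then have vj: "1 \<le> j" "j \<le> n" using vx by (auto simp: tvb_valid_gen_def)
    have vy: "tvh_valid_gen n (G j)" using vj by (auto simp: tvh_valid_gen_def)
    have "EQ n (rhob True qs @ (a # w)) ((rhob True qs @ [a]) @ w)" by (simp add: pe_refl)
    also have "EQ n ... (imgs b (G (pm n qs j)) @ rhob True qs @ w)"
      using pe_app[OF move_letter[OF Cons.prems(2) vy, of b a] pe_refl[of _ w]] by (simp add: imgs_gam a Gam)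
    also have "EQ n ... (imgs b (G (pm n qs j)) @ subst (tau n (pm n qs) w) @ rhob True (qs @ rl w))"
      by (rule pe_app[OF pe_refl Cons.IH[OF vw Cons.prems(2)]])
    finally show ?thesis using vj by (simp add: a Gam subst_Cons subst_append)
  next
    case (Rho i)
    then have vi: "1 \<le> i" "i \<le> n - 1" using vx by (auto simp: tvb_valid_gen_def)
    have vq': "vq n (qs @ [i])" using Cons.prems(2) vi by (simp add: vq_append vq_def)
    have l: "EQ n [a] [r i]"
      using K3[OF vi] a Rho by (cases b) (simp_all add: pe_refl)
    have "EQ n (rhob True qs @ (a # w)) (rhob True qs @ [r i] @ w)"
      using pe_ctx[OF l, of "rhob True qs" w] by simp
    also have "rhob True qs @ [r i] @ w = rhob True (qs @ [i]) @ w" by (simp add: rhob_def)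
    also have "EQ n ... (subst (tau n (pm n (qs @ [i])) w) @ rhob True ((qs @ [i]) @ rl w))"
      by (rule Cons.IH[OF vw vq'])
    also have "pm n (qs @ [i]) = pm n qs \<circ> transpose i (Suc i)"
      by (simp add: pm_append pm_Cons[OF vi] pm_Nil)
    finally show ?thesis using vi by (simp add: a Rho comp_def)
  qed
qed

lemma st_rl: "valid_tvb n w \<Longrightarrow> st n p w = st n p (rhob True (rl w))"
proof (induction w arbitrary: p)
  case Nil then show ?case by (simp add: rhob_def)
next
  case (Cons a w)
  obtain x b where a: "a = (x, b)" by (cases a)
  have vw: "valid_tvb n w" using Cons.prems a by (auto simp: valid_Cons)
  show ?case using Cons.IH[OF vw] by (cases x) (simp_all add: a rhob_def)
qed

lemma phiH_Cons: "phiH ((x, b) # w) = (if b then letter_perm x else inv (letter_perm x)) \<circ> phiH w"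
  by (simp add: phiH_def)

lemma st_phiH: "valid_tvb n w \<Longrightarrow> st n p w = p \<circ> phiH w"
proof (induction w arbitrary: p)
  case Nil then show ?case by (simp add: phiH_def)
next
  case (Cons a w)
  obtain x b where a: "a = (x, b)" by (cases a)
  have vx: "tvb_valid_gen n x" and vw: "valid_tvb n w" using Cons.prems a by (auto simp: valid_Cons)
  show ?case
  proof (cases x)
    case (Rho i)
    then have vi: "1 \<le> i" "i \<le> n - 1" using vx by (auto simp: tvb_valid_gen_def)
    then show ?thesis using Cons.IH[OF vw, of "p \<circ> transpose i (Suc i)"]
      by (simp add: a Rho phiH_Cons letter_perm_def comp_def)
  qed (use Cons.IH[OF vw] in \<open>simp_all add: a phiH_Cons letter_perm_def\<close>)
qed

lemma valid_tau: "PP n p \<Longrightarrow> valid_tvh n (tau n p w)"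
proof (induction w arbitrary: p)
  case Nil then show ?case by (simp add: valid_tvh_def)
next
  case (Cons a w)
  obtain x b where a: "a = (x, b)" by (cases a)
  show ?case
  proof (cases x)
    case (Sig i)
    have "1 \<le> i \<and> i \<le> n - 1 \<Longrightarrow> tvh_valid_gen n (X (p i) (p (Suc i)))"
    proof -
      assume h: "1 \<le> i \<and> i \<le> n - 1"
      then have h2: "Suc i \<le> n" "i \<le> n" "1 \<le> Suc i" by arith+
      show ?thesis
        using PP_in[OF Cons.prems, of i] PP_in[OF Cons.prems, of "Suc i"] PP_ne[OF Cons.prems, of i "Suc i"] h h2
        by (simp add: tvh_valid_gen_def inrange_def)
    qed
    then show ?thesis using Cons.IH[OF Cons.prems] by (auto simp: a Sig valid_tvh_def)
  next
    case (Gam j)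
    have "1 \<le> j \<and> j \<le> n \<Longrightarrow> tvh_valid_gen n (G (p j))"
      using PP_in[OF Cons.prems, of j] by (auto simp: tvh_valid_gen_def inrange_def)
    then show ?thesis using Cons.IH[OF Cons.prems] by (auto simp: a Gam valid_tvh_def)
  next
    case (Rho i)
    then show ?thesis using Cons.IH PP_step[OF Cons.prems] Cons.prems by (auto simp: a)
  qed
qed




lemma pm_fix: "vq n u \<Longrightarrow> (\<forall>x\<in>set u. x \<noteq> y \<and> Suc x \<noteq> y) \<Longrightarrow> pm n u y = y"
proof (induction u)
  case Nil then show ?case by (simp add: pm_Nil)
next
  case (Cons x u)
  then have v: "1 \<le> x" "x \<le> n - 1" "vq n u" by (auto simp: vq_Cons)
  then show ?case using Cons by (simp add: pm_Cons[OF v(1,2)] transpose_def)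
qed

lemma NF: "Suc m \<le> n \<Longrightarrow> (\<forall>x\<in>set qs. 1 \<le> x \<and> x \<le> m) \<Longrightarrow>
  \<exists>u k. 1 \<le> k \<and> k \<le> Suc m \<and> (\<forall>x\<in>set u. 1 \<le> x \<and> x < m) \<and>
        EQ n (rhob True qs) (rhob True u @ rhob True (rev [k..<Suc m]))"
proof (induction qs rule: rev_induct)
  case Nil
  have "EQ n (rhob True []) (rhob True [] @ rhob True (rev [Suc m..<Suc m]))" by (simp add: rhob_def pe_refl)
  then show ?case by (intro exI[of _ "[]"] exI[of _ "Suc m"]) simp
next
  case (snoc j qs)
  have pq: "\<forall>x\<in>set qs. 1 \<le> x \<and> x \<le> m" using snoc.prems(2) by simp
  obtain u k where uk: "1 \<le> k" "k \<le> Suc m" "\<forall>x\<in>set u. 1 \<le> x \<and> x < m"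
      "EQ n (rhob True qs) (rhob True u @ rhob True (rev [k..<Suc m]))"
    using snoc.IH[OF snoc.prems(1) pq] by blast
  have j: "1 \<le> j" "j \<le> m" using snoc.prems(2) by simp_all
  have nm: "Suc m \<le> n" by (rule snoc.prems(1))
  define P where "P = (\<lambda>u k. 1 \<le> k \<and> k \<le> Suc m \<and> (\<forall>x\<in>set u. 1 \<le> x \<and> x < m) \<and>
        EQ n (rhob True (qs @ [j])) (rhob True u @ rhob True (rev [k..<Suc m])))"
  have E0: "EQ n (rhob True (qs @ [j])) (rhob True u @ rhob True (rev [k..<Suc m]) @ [r j])"
    using pe_app[OF uk(4) pe_refl[of _ "[r j]"]] by (simp add: rhob_def)
  have "\<exists>u k. P u k"
  proof -
    consider "k = Suc m" "j = m" | "k = Suc m" "j < m" | "k \<le> m" "Suc j = k" | "k \<le> m" "j = k"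
      | "k \<le> m" "k < j" | "k \<le> m" "Suc j < k"
      using uk(2) j by linarith
    then show ?thesis
    proof cases
      case 1
      have "EQ n (rhob True (qs @ [j])) (rhob True u @ rhob True (rev [m..<Suc m]))"
        using E0 1 by (simp add: rhob_def)
      then have "P u m" unfolding P_def using uk(3) 1 j by simp
      then show ?thesis by blast
    next
      case 2
      have "EQ n (rhob True (qs @ [j])) (rhob True (u @ [j]) @ rhob True (rev [k..<Suc m]))"
        using E0 2 by (simp add: rhob_def)
      moreover have "\<forall>x\<in>set (u @ [j]). 1 \<le> x \<and> x < m" using uk(3) 2 j by simp
      ultimately have "P (u @ [j]) k" unfolding P_def using uk(1,2) by simp
      then show ?thesis by blast
    next
      case 3
      have e: "rev [j..<Suc m] = rev [k..<Suc m] @ [j]" using 3 by (simp add: upt_conv_Cons)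
      have e2: "rhob True (rev [j..<Suc m]) = rhob True (rev [k..<Suc m]) @ [r j]"
        unfolding e rhob_append by (simp add: rhob_def)
      have "EQ n (rhob True (qs @ [j])) (rhob True u @ rhob True (rev [j..<Suc m]))"
        using E0 unfolding e2 by simp
      then have "P u j" unfolding P_def using uk(3) 3 j by simp
      then show ?thesis by blast
    next
      case 4
      have e: "rev [k..<Suc m] = rev [Suc k..<Suc m] @ [k]" using 4 by (simp add: upt_conv_Cons)
      have vk: "1 \<le> k" "k \<le> n - 1" using 4 uk(1) nm by simp_all
      have e2: "rhob True (rev [k..<Suc m]) = rhob True (rev [Suc k..<Suc m]) @ [r k]"
        unfolding e rhob_append by (simp add: rhob_def)
      have "EQ n (rhob True (qs @ [j])) ((rhob True u @ rhob True (rev [Suc k..<Suc m])) @ [r k, r k] @ [])"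
        using E0 4 unfolding e2 by simp
      also have "EQ n ... ((rhob True u @ rhob True (rev [Suc k..<Suc m])) @ [] @ [])"
        by (rule rw[OF B_rr[OF vk]]) simp
      finally have "P u (Suc k)" unfolding P_def using uk(3) 4 by simp
      then show ?thesis by blast
    next
      case 5
      have S: "EQ n ([r (j - 1)] @ rhob True (rev [k..<Suc m])) (rhob True (rev [k..<Suc m]) @ [r (Suc (j - 1))])"
        by (rule S2) (use 5 uk(1) j nm in simp_all)
      have "EQ n (rhob True (qs @ [j])) (rhob True u @ (rhob True (rev [k..<Suc m]) @ [r (Suc (j - 1))]) @ [])"
        using E0 5 by simp
      also have "EQ n ... (rhob True u @ ([r (j - 1)] @ rhob True (rev [k..<Suc m])) @ [])"
        by (rule rwb[OF S]) simp
      also have "rhob True u @ ([r (j - 1)] @ rhob True (rev [k..<Suc m])) @ [] = rhob True (u @ [j - 1]) @ rhob True (rev [k..<Suc m])"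
        by (simp add: rhob_def)
      finally have EQ5: "EQ n (rhob True (qs @ [j])) (rhob True (u @ [j - 1]) @ rhob True (rev [k..<Suc m]))" .
      have a5: "1 \<le> j - 1" "j - 1 < m" using 5 uk(1) j by arith+
      have "P (u @ [j - 1]) k" unfolding P_def using EQ5 a5 uk(1,2,3) by (simp del: upt_Suc)
      then show ?thesis by blast
    next
      case 6
      have far: "\<forall>x\<in>set (rev [k..<Suc m]). 1 \<le> x \<and> x \<le> n - 1 \<and> (x + 2 \<le> j \<or> j + 2 \<le> x)"
        using 6 nm by auto
      have S: "EQ n (rhob True (rev [k..<Suc m]) @ [r j]) ([r j] @ rhob True (rev [k..<Suc m]))"
        by (rule S1'[OF _ _ far]) (use j nm in simp_all)
      have "EQ n (rhob True (qs @ [j])) (rhob True u @ (rhob True (rev [k..<Suc m]) @ [r j]) @ [])"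
        using E0 by simp
      also have "EQ n ... (rhob True u @ ([r j] @ rhob True (rev [k..<Suc m])) @ [])"
        by (rule rw[OF S]) simp
      also have "rhob True u @ ([r j] @ rhob True (rev [k..<Suc m])) @ [] = rhob True (u @ [j]) @ rhob True (rev [k..<Suc m])"
        by (simp add: rhob_def)
      finally have EQ6: "EQ n (rhob True (qs @ [j])) (rhob True (u @ [j]) @ rhob True (rev [k..<Suc m]))" .
      have a6: "j < m" using 6 j by arith
      have "P (u @ [j]) k" unfolding P_def using EQ6 a6 j uk(1,2,3) by (simp del: upt_Suc)
      then show ?thesis by blast
    qed
  qed
  then show ?case unfolding P_def .
qed

lemma pm_EQ: "EQ n (rhob True qs) (rhob True qs') \<Longrightarrow> pm n qs = pm n qs'"
  unfolding pm_def using tau_pres[OF _ PP_id] by blast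

lemma COX: "m \<le> n \<Longrightarrow> (\<forall>x\<in>set qs. 1 \<le> x \<and> x < m) \<Longrightarrow> pm n qs = id \<Longrightarrow> EQ n (rhob True qs) []"
proof (induction m arbitrary: qs)
  case 0
  then have "qs = []" by (cases qs) auto
  then show ?case by (simp add: rhob_def pe_refl)
next
  case (Suc m)
  obtain u k where uk: "1 \<le> k" "k \<le> Suc m" "\<forall>x\<in>set u. 1 \<le> x \<and> x < m"
      "EQ n (rhob True qs) (rhob True u @ rhob True (rev [k..<Suc m]))"
  proof -
    have pq: "\<forall>x\<in>set qs. 1 \<le> x \<and> x \<le> m" using Suc.prems(2) by auto
    have nm: "Suc m \<le> n" using Suc.prems(1) by simp
    show ?thesis using NF[OF nm pq] that by blast
  qed
  have vu: "vq n u" using uk(3) Suc.prems(1) by (auto simp: vq_def)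
  have pmq: "pm n qs = pm n u \<circ> pm n (rev [k..<Suc m])"
    using pm_EQ[of n qs "u @ rev [k..<Suc m]"] uk(4) by (simp add: rhob_append pm_append)
  have "k = Suc m"
  proof (rule ccontr)
    assume "k \<noteq> Suc m"
    then have km: "k \<le> m" using uk(2) by simp
    have "pm n (rev [k..<Suc m]) = cyc k m"
      using st_cyc[of k m n id True] uk(1) km Suc.prems(1) by (simp add: pm_def rev_rhob)
    then have "pm n (rev [k..<Suc m]) k = Suc m" by (simp add: cyc_def)
    moreover have "pm n u (Suc m) = Suc m" by (rule pm_fix[OF vu]) (use uk(3) in auto)
    ultimately have "pm n qs k = Suc m" using pmq by simp
    then show False using Suc.prems(3) km by simp
  qed
  then have E: "EQ n (rhob True qs) (rhob True u)" using uk(4) by (simp add: rhob_def)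
  have "pm n u = id" using pm_EQ[OF E] Suc.prems(3) by metis
  then have "EQ n (rhob True u) []" using Suc.IH[of u] Suc.prems uk(3) by simp
  then show ?case using E by (rule pres_eq.trans[rotated])
qed

lemma part2: assumes "valid_tvb n w" "phiH w = id"
  shows "\<exists>v. valid_tvh n v \<and> EQ n (subst v) w"
proof -
  have vq0: "vq n []" by (simp add: vq_def)
  have E: "EQ n w (subst (tau n id w) @ rhob True (rl w))"
    using Pt2[OF assms(1) vq0] by (simp add: rhob_def pm_def)
  have vrl: "\<forall>x\<in>set (rl w). 1 \<le> x \<and> x < n"
    using assms(1)
  proof (induction w)
    case Nil then show ?case by simp
  next
    case (Cons a w)
    obtain x b where a: "a = (x, b)" by (cases a)
    have vx: "tvb_valid_gen n x" and vw: "valid_tvb n w" using Cons.prems a by (auto simp: valid_Cons)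
    show ?case using Cons.IH[OF vw] vx by (cases x) (auto simp: a tvb_valid_gen_def)
  qed
  have "pm n (rl w) = st n id w" unfolding pm_def by (rule st_rl[OF assms(1), symmetric])
  also have "\<dots> = id" using st_phiH[OF assms(1), of id] assms(2) by simp
  finally have "EQ n (rhob True (rl w)) []" using COX[of n n "rl w"] vrl by simp
  then have "EQ n (subst (tau n id w) @ rhob True (rl w) @ []) (subst (tau n id w) @ [] @ [])"
    by (rule pe_ctx)
  then have "EQ n w (subst (tau n id w))"
    using pres_eq.trans[OF E] by simp
  moreover have "valid_tvh n (tau n id w)" by (rule valid_tau[OF PP_id])
  ultimately show ?thesis by (blast intro: pe_sym)
qed

lemma valid_inv_word: "valid_tvb n w \<Longrightarrow> valid_tvb n (inv_word w)"
  by (auto simp: valid_tvb_def inv_word_def)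

lemma valid_rhob: "\<forall>x\<in>set L. 1 \<le> x \<and> x \<le> n - 1 \<Longrightarrow> valid_tvb n (rhob c L)"
  by (auto simp: valid_tvb_def rhob_def tvb_valid_gen_def)

lemma valid_xword: "1 \<le> k \<Longrightarrow> k \<le> n \<Longrightarrow> 1 \<le> l \<Longrightarrow> l \<le> n \<Longrightarrow> k \<noteq> l \<Longrightarrow> valid_tvb n (xword k l)"
proof -
  assume h: "1 \<le> k" "k \<le> n" "1 \<le> l" "l \<le> n" "k \<noteq> l"
  have p: "1 \<le> min k l" "min k l \<le> n - 1" "max k l \<le> n" using h by auto
  have a: "valid_tvb n (rhob True (rev [Suc (min k l)..<max k l]))" "valid_tvb n (rhob True [Suc (min k l)..<max k l])"
    by (intro valid_rhob, use p in auto)+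
  have b: "valid_tvb n (Y c (min k l))" for c
    using p by (auto simp: Y_def valid_tvb_def tvb_valid_gen_def)
  show ?thesis using a b[of "k < l"] unfolding xword_Cw[OF h(5)] Cw_def valid_tvb_def by auto
qed

lemma valid_subst: "valid_tvh n v \<Longrightarrow> valid_tvb n (subst v)"
proof (induction v)
  case Nil then show ?case by (simp add: subst_Nil valid_tvb_def)
next
  case (Cons a v)
  obtain y b where a: "a = (y, b)" by (cases a)
  have vy: "tvh_valid_gen n y" and vv: "valid_tvh n v" using Cons.prems a by (auto simp: valid_tvh_def)
  have "valid_tvb n (tvh_img y)"
  proof (cases y)
    case (X k l) then show ?thesis using vy by (auto simp: tvh_img_def tvh_valid_gen_def intro!: valid_xword)
  next
    case (G j) then show ?thesis using vy by (auto simp: tvh_img_def tvh_valid_gen_def valid_tvb_def tvb_valid_gen_def)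
  qed
  then have "valid_tvb n (imgs b y)" by (auto simp: imgs_def intro: valid_inv_word)
  then show ?case using Cons.IH[OF vv] unfolding a subst_Cons valid_tvb_def set_append by blast
qed

lemma part1: "valid_tvh n v \<Longrightarrow> phiH (subst v) = id"
  using st_phiH[OF valid_subst, of n v id] tau_subst[of n v id] by simp

theorem mainTheorem9:
  fixes n :: nat
  assumes "n \<ge> 2"
  shows "(\<forall>v. valid_tvh n v \<longrightarrow> phiH (subst v) = id)
       \<and> (\<forall>w. valid_tvb n w \<and> phiH w = id \<longrightarrow>
             (\<exists>v. valid_tvh n v \<and> pres_eq (tvb_rels n) (subst v) w))
       \<and> (\<forall>v1 v2. valid_tvh n v1 \<and> valid_tvh n v2 \<longrightarrow>
             (pres_eq (tvb_rels n) (subst v1) (subst v2) \<longleftrightarrow> pres_eq (tvh_rels n) v1 v2))"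
  using part1 part2 only_if_dir if_dir by blast


end
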